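(* Let $f\in\mathrm{Rat}_2$. (1) If $f$ has three distinct fixed points, then $\mathrm{Aut}(f)$ acts faithfully on the fixed point set and coincides with the group of all permutations of the three fixed points which preserve multipliers; hence $|\mathrm{Aut}(f)|$ is $1$, $2$ or $6$ according as the three multipliers are pairwise distinct, exactly two are equal, or all three are equal. (2) If $f$ has exactly two distinct fixed points, then $\mathrm{Aut}(f)$ is trivial. (3) If $f$ has exactly one fixed point, then $\mathrm{Aut}(f)$ is cyclic of order two.
   Context: $\mathrm{Rat}_2$ is the space of holomorphic degree-$2$ maps of the Riemann sphere; each $f$ has three fixed points counted with multiplicity, and the multiplier of a fixed point $z_i$ is $f'(z_i)$ (in the coordinate $1/z$ at $\infty$). An automorphism of $f$ is a Möbius transformation $g$ with $g\circ f\circ g^{-1}=f$; $\mathrm{Aut}(f)$ is the group of all automorphisms of $f$. *)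

theory Defs
  imports "HOL-Analysis.Analysis" "HOL-Computational_Algebra.Polynomial"
begin

text \<open>The Riemann sphere is modelled as \<open>complex option\<close>: \<open>Some z\<close> is the finite
  point \<open>z\<close> and \<open>None\<close> is the point \<open>\<infinity>\<close>.\<close>

type_synonym sphere = "complex option"

text \<open>For coprime \<open>P, Q\<close>
  with \<open>max (deg P) (deg Q) = 2\<close>, the value at \<open>\<infinity>\<close> is the limit, i.e. the ratio of the
  degree-2 coefficients (\<open>\<infinity>\<close> if \<open>deg Q < 2\<close>).\<close>
definition rat_eval :: "complex poly \<Rightarrow> complex poly \<Rightarrow> sphere \<Rightarrow> sphere" where
  "rat_eval P Q w = (case w of
      Some z \<Rightarrow> (if poly Q z = 0 then None else Some (poly P z / poly Q z))
    | None \<Rightarrow> (if coeff Q 2 = 0 then None else Some (coeff P 2 / coeff Q 2)))"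

definition Rat2 :: "(sphere \<Rightarrow> sphere) set" where
  "Rat2 = {rat_eval P Q | P Q. coprime P Q \<and> max (degree P) (degree Q) = 2}"

definition moebius :: "complex \<Rightarrow> complex \<Rightarrow> complex \<Rightarrow> complex \<Rightarrow> sphere \<Rightarrow> sphere" where
  "moebius a b c d w = (case w of
      Some z \<Rightarrow> (if c * z + d = 0 then None else Some ((a * z + b) / (c * z + d)))
    | None \<Rightarrow> (if c = 0 then None else Some (a / c)))"

definition Moeb :: "(sphere \<Rightarrow> sphere) set" where
  "Moeb = {moebius a b c d | a b c d. a * d - b * c \<noteq> 0}"

definition Aut :: "(sphere \<Rightarrow> sphere) \<Rightarrow> (sphere \<Rightarrow> sphere) set" where
  "Aut f = {g \<in> Moeb. g \<circ> f \<circ> inv g = f}"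

definition fixpts :: "(sphere \<Rightarrow> sphere) \<Rightarrow> sphere set" where
  "fixpts f = {z. f z = z}"

definition chart_inf :: "sphere \<Rightarrow> complex" where
  "chart_inf w = (case w of None \<Rightarrow> 0 | Some z \<Rightarrow> 1 / z)"

definition chart_inf_inv :: "complex \<Rightarrow> sphere" where
  "chart_inf_inv w = (if w = 0 then None else Some (1 / w))"

definition multiplier :: "(sphere \<Rightarrow> sphere) \<Rightarrow> sphere \<Rightarrow> complex" where
  "multiplier f p = (case p of
      Some z \<Rightarrow> deriv (\<lambda>w. the (f (Some w))) z
    | None \<Rightarrow> deriv (\<lambda>w. chart_inf (f (chart_inf_inv w))) 0)"

end

theory Submission
  imports Defs "HOL-Library.FuncSet"
begin

definition proj :: "complex \<Rightarrow> complex \<Rightarrow> sphere" where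
  "proj x y = (if y = 0 then None else Some (x / y))"

definition rep :: "sphere \<Rightarrow> complex \<times> complex" where
  "rep p = (case p of None \<Rightarrow> (1, 0) | Some z \<Rightarrow> (z, 1))"

lemma proj_rep: "proj (fst (rep p)) (snd (rep p)) = p"
  by (cases p) (auto simp: proj_def rep_def)

lemma rep_nz: "rep p \<noteq> (0, 0)"
  by (cases p) (auto simp: rep_def)

lemma proj_eq:
  assumes "(x, y) \<noteq> (0, 0)" "(u, v) \<noteq> (0, 0)"
  shows "proj x y = proj u v \<longleftrightarrow> x * v = y * u"
  using assms by (auto simp: proj_def field_simps)

lemma proj_scale: "s \<noteq> 0 \<Longrightarrow> proj (s * x) (s * y) = proj x y"
  by (auto simp: proj_def)

lemma ext_proj:
  assumes "\<And>x y. (x, y) \<noteq> (0, 0) \<Longrightarrow> F (proj x y) = G (proj x y)"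
  shows "F = G"
proof
  fix p
  show "F p = G p" using assms[of "fst (rep p)" "snd (rep p)"] rep_nz[of p]
    by (simp add: proj_rep)
qed

lemma lin_nz:
  assumes "a * d - b * c \<noteq> (0::complex)" "(x, y) \<noteq> (0, 0)"
  shows "(a * x + b * y, c * x + d * y) \<noteq> (0, 0)"
proof
  assume h: "(a * x + b * y, c * x + d * y) = (0, 0)"
  hence e1: "a * x + b * y = 0" and e2: "c * x + d * y = 0" by auto
  have "(a * d - b * c) * x = d * (a * x + b * y) - b * (c * x + d * y)"
    by (simp add: algebra_simps)
  moreover have "(a * d - b * c) * y = a * (c * x + d * y) - c * (a * x + b * y)"
    by (simp add: algebra_simps)
  ultimately have "(a * d - b * c) * x = 0" "(a * d - b * c) * y = 0"
    using e1 e2 by auto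
  thus False using assms by auto
qed

lemma moeb_proj:
  assumes "a * d - b * c \<noteq> 0" "(x, y) \<noteq> (0, 0)"
  shows "moebius a b c d (proj x y) = proj (a * x + b * y) (c * x + d * y)"
proof (cases "y = 0")
  case True
  then show ?thesis using assms by (auto simp: moebius_def proj_def)
next
  case False
  have "c * (x / y) + d = (c * x + d * y) / y" using False by (simp add: field_simps)
  moreover have "a * (x / y) + b = (a * x + b * y) / y" using False by (simp add: field_simps)
  ultimately show ?thesis using False by (simp add: moebius_def proj_def)
qed

lemma moeb_comp:
  assumes "a * d - b * c \<noteq> 0" "a' * d' - b' * c' \<noteq> 0"
  shows "moebius a b c d \<circ> moebius a' b' c' d' =
    moebius (a * a' + b * c') (a * b' + b * d') (c * a' + d * c') (c * b' + d * d')"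
proof (rule ext_proj)
  fix x y :: complex assume xy: "(x, y) \<noteq> (0, 0)"
  have det: "(a * a' + b * c') * (c * b' + d * d') - (a * b' + b * d') * (c * a' + d * c')
      = (a * d - b * c) * (a' * d' - b' * c')" by (simp add: algebra_simps)
  have nz: "(a' * x + b' * y, c' * x + d' * y) \<noteq> (0, 0)" using lin_nz[OF assms(2) xy] .
  show "(moebius a b c d \<circ> moebius a' b' c' d') (proj x y) =
    moebius (a * a' + b * c') (a * b' + b * d') (c * a' + d * c') (c * b' + d * d') (proj x y)"
  proof -
    have "(moebius a b c d \<circ> moebius a' b' c' d') (proj x y) =
      proj (a * (a' * x + b' * y) + b * (c' * x + d' * y)) (c * (a' * x + b' * y) + d * (c' * x + d' * y))"
      using assms nz xy by (simp add: moeb_proj)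
    also have "\<dots> = proj ((a * a' + b * c') * x + (a * b' + b * d') * y) ((c * a' + d * c') * x + (c * b' + d * d') * y)"
      by (simp add: algebra_simps)
    also have "\<dots> = moebius (a * a' + b * c') (a * b' + b * d') (c * a' + d * c') (c * b' + d * d') (proj x y)"
      using det assms xy by (simp add: moeb_proj)
    finally show ?thesis .
  qed
qed

lemma moeb_scale:
  assumes "s \<noteq> 0"
  shows "moebius (s * a) (s * b) (s * c) (s * d) = moebius a b c d"
proof
  fix w show "moebius (s * a) (s * b) (s * c) (s * d) w = moebius a b c d w"
  proof (cases w)
    case None thus ?thesis using assms by (simp add: moebius_def)
  next
    case (Some z)
    have e1: "s * c * z + s * d = s * (c * z + d)" "s * a * z + s * b = s * (a * z + b)"
      by (simp_all add: algebra_simps)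
    show ?thesis using assms by (simp add: moebius_def Some e1)
  qed
qed

lemma moeb_id: "moebius 1 0 0 1 = id"
  by (auto simp: moebius_def fun_eq_iff split: option.splits)

lemma moeb_inv_comp:
  assumes "a * d - b * c \<noteq> 0"
  shows "moebius d (- b) (- c) a \<circ> moebius a b c d = id"
    and "moebius a b c d \<circ> moebius d (- b) (- c) a = id"
proof -
  have "moebius d (- b) (- c) a \<circ> moebius a b c d =
     moebius ((a * d - b * c) * 1) ((a * d - b * c) * 0) ((a * d - b * c) * 0) ((a * d - b * c) * 1)"
    using assms by (subst moeb_comp) (auto simp: algebra_simps)
  thus "moebius d (- b) (- c) a \<circ> moebius a b c d = id"
    using assms by (simp only: moeb_scale[OF assms] moeb_id)
  have "moebius a b c d \<circ> moebius d (- b) (- c) a =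
     moebius ((a * d - b * c) * 1) ((a * d - b * c) * 0) ((a * d - b * c) * 0) ((a * d - b * c) * 1)"
    using assms by (subst moeb_comp) (auto simp: algebra_simps)
  thus "moebius a b c d \<circ> moebius d (- b) (- c) a = id"
    using assms by (simp only: moeb_scale[OF assms] moeb_id)
qed

lemma moeb_inv:
  assumes "a * d - b * c \<noteq> 0"
  shows "inv (moebius a b c d) = moebius d (- b) (- c) a"
  using moeb_inv_comp(2,1)[OF assms] by (rule inv_unique_comp)

lemma moeb_bij:
  assumes "a * d - b * c \<noteq> 0"
  shows "bij (moebius a b c d)"
  using moeb_inv_comp[OF assms] o_bij by blast

lemma Moeb_bij: "g \<in> Moeb \<Longrightarrow> bij g"
  unfolding Moeb_def using moeb_bij by blast

lemma Moeb_inv: "g \<in> Moeb \<Longrightarrow> inv g \<in> Moeb"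
  unfolding Moeb_def
proof safe
  fix a b c d :: complex assume "a * d - b * c \<noteq> 0"
  thus "\<exists>a' b' c' d'. inv (moebius a b c d) = moebius a' b' c' d' \<and> a' * d' - b' * c' \<noteq> 0"
    by (intro exI[of _ d] exI[of _ "-b"] exI[of _ "-c"] exI[of _ a])
       (auto simp: moeb_inv algebra_simps)
qed

lemma Moeb_comp: "g \<in> Moeb \<Longrightarrow> h \<in> Moeb \<Longrightarrow> g \<circ> h \<in> Moeb"
  unfolding Moeb_def
proof safe
  fix a b c d a' b' c' d' :: complex
  assume h1: "a * d - b * c \<noteq> 0" and h2: "a' * d' - b' * c' \<noteq> 0"
  have det: "(a * a' + b * c') * (c * b' + d * d') - (a * b' + b * d') * (c * a' + d * c')
      = (a * d - b * c) * (a' * d' - b' * c')" by (simp add: algebra_simps)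
  show "\<exists>a'' b'' c'' d''. moebius a b c d \<circ> moebius a' b' c' d' = moebius a'' b'' c'' d'' \<and>
     a'' * d'' - b'' * c'' \<noteq> 0"
    using moeb_comp[OF h1 h2] det h1 h2 by (intro exI) auto
qed

lemma id_Moeb: "id \<in> Moeb"
  unfolding Moeb_def using moeb_id by (intro CollectI exI[of _ 1] exI[of _ 0]) (auto simp: moeb_id[symmetric])

lemma Aut_iff: "g \<in> Aut f \<longleftrightarrow> g \<in> Moeb \<and> g \<circ> f = f \<circ> g"
proof -
  { assume "g \<in> Moeb"
    hence b: "bij g" by (rule Moeb_bij)
    have "g \<circ> f \<circ> inv g = f \<longleftrightarrow> g \<circ> f = f \<circ> g"
    proof
      assume "g \<circ> f \<circ> inv g = f"
      hence "g \<circ> f \<circ> inv g \<circ> g = f \<circ> g" by simp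
      thus "g \<circ> f = f \<circ> g" using b by (simp add: o_assoc[symmetric] bij_is_inj)
    next
      assume "g \<circ> f = f \<circ> g"
      hence "g \<circ> f \<circ> inv g = f \<circ> g \<circ> inv g" by simp
      moreover have "g \<circ> inv g = id" using b bij_is_surj surj_iff by blast
      ultimately show "g \<circ> f \<circ> inv g = f" by (simp add: o_assoc[symmetric])
    qed }
  thus ?thesis unfolding Aut_def by auto
qed

datatype cf = CF (p0: complex) (p1: complex) (p2: complex) (q0: complex) (q1: complex) (q2: complex)

definition Ph :: "cf \<Rightarrow> complex \<Rightarrow> complex \<Rightarrow> complex" where
  "Ph c x y = p2 c * x^2 + p1 c * x * y + p0 c * y^2"
definition Qh :: "cf \<Rightarrow> complex \<Rightarrow> complex \<Rightarrow> complex" where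
  "Qh c x y = q2 c * x^2 + q1 c * x * y + q0 c * y^2"

definition rm :: "cf \<Rightarrow> sphere \<Rightarrow> sphere" where
  "rm c w = (case w of Some z \<Rightarrow> (if Qh c z 1 = 0 then None else Some (Ph c z 1 / Qh c z 1))
     | None \<Rightarrow> (if q2 c = 0 then None else Some (p2 c / q2 c)))"

definition nd :: "cf \<Rightarrow> bool" where
  "nd c \<longleftrightarrow> (\<forall>x y. Ph c x y = 0 \<and> Qh c x y = 0 \<longrightarrow> x = 0 \<and> y = 0)"

lemma nd_nz: "nd c \<Longrightarrow> (x, y) \<noteq> (0, 0) \<Longrightarrow> (Ph c x y, Qh c x y) \<noteq> (0, 0)"
  unfolding nd_def prod.inject by blast

lemma rm_proj:
  assumes "nd c" "(x, y) \<noteq> (0, 0)"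
  shows "rm c (proj x y) = proj (Ph c x y) (Qh c x y)"
proof (cases "y = 0")
  case True
  then have "x \<noteq> 0" using assms by auto
  then show ?thesis using True by (simp add: rm_def proj_def Ph_def Qh_def)
next
  case False
  have "Ph c x y = y^2 * Ph c (x / y) 1" "Qh c x y = y^2 * Qh c (x / y) 1"
    using False by (simp_all add: Ph_def Qh_def field_simps power2_eq_square)
  then show ?thesis using False by (simp add: rm_def proj_def)
qed

lemma poly_deg2:
  fixes P :: "complex poly"
  assumes "degree P \<le> 2"
  shows "poly P z = coeff P 0 + coeff P 1 * z + coeff P 2 * z^2"
proof -
  have "poly P z = (\<Sum>i\<le>degree P. coeff P i * z ^ i)" by (rule poly_altdef)
  also have "\<dots> = (\<Sum>i\<le>2. coeff P i * z ^ i)"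
    using assms by (intro sum.mono_neutral_left) (auto simp: coeff_eq_0)
  also have "\<dots> = coeff P 0 + coeff P 1 * z + coeff P 2 * z^2"
    by (simp add: numeral_2_eq_2)
  finally show ?thesis .
qed

lemma Rat2_rm:
  assumes "f \<in> Rat2"
  shows "\<exists>c. nd c \<and> f = rm c"
proof -
  obtain P Q where f: "f = rat_eval P Q" and cop: "coprime P Q" and dg: "max (degree P) (degree Q) = 2"
    using assms unfolding Rat2_def by auto
  define c where "c = CF (coeff P 0) (coeff P 1) (coeff P 2) (coeff Q 0) (coeff Q 1) (coeff Q 2)"
  have dP: "degree P \<le> 2" and dQ: "degree Q \<le> 2" using dg by auto
  have pP: "poly P z = Ph c z 1" and pQ: "poly Q z = Qh c z 1" for z
    using poly_deg2[OF dP] poly_deg2[OF dQ] by (simp_all add: c_def Ph_def Qh_def algebra_simps)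
  have "f = rm c"
  proof
    fix w show "f w = rm c w"
    proof (cases w)
      case None thus ?thesis unfolding f by (simp add: rat_eval_def rm_def c_def)
    next
      case (Some z) thus ?thesis unfolding f by (simp add: rat_eval_def rm_def pP pQ)
    qed
  qed
  moreover have "nd c"
    unfolding nd_def
  proof (intro allI impI)
    fix x y assume h: "Ph c x y = 0 \<and> Qh c x y = 0"
    show "x = 0 \<and> y = 0"
    proof (rule ccontr)
      assume nz: "\<not> (x = 0 \<and> y = 0)"
      show False
      proof (cases "y = 0")
        case True
        hence "x \<noteq> 0" using nz by auto
        hence "coeff P 2 = 0" "coeff Q 2 = 0" using h True by (auto simp: Ph_def Qh_def c_def)
        moreover have "degree P = 2 \<or> degree Q = 2" using dg by linarith
        moreover have "coeff P (degree P) \<noteq> 0" if "degree P = 2"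
          using that by (metis leading_coeff_0_iff degree_0 zero_neq_numeral)
        moreover have "coeff Q (degree Q) \<noteq> 0" if "degree Q = 2"
          using that by (metis leading_coeff_0_iff degree_0 zero_neq_numeral)
        ultimately show False by auto
      next
        case False
        have "Ph c x y = y^2 * Ph c (x / y) 1" "Qh c x y = y^2 * Qh c (x / y) 1"
          using False by (simp_all add: Ph_def Qh_def field_simps power2_eq_square)
        hence "poly P (x / y) = 0" "poly Q (x / y) = 0" using h False pP pQ by auto
        hence "[:- (x / y), 1:] dvd P" "[:- (x / y), 1:] dvd Q" by (simp_all add: poly_eq_0_iff_dvd)
        hence "is_unit [:- (x / y), 1:]" using cop coprime_common_divisor by blast
        thus False by (simp add: is_unit_iff_degree)
      qed
    qed
  qed
  ultimately show ?thesis by blast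
qed

definition sc :: "complex \<Rightarrow> cf \<Rightarrow> cf" where
  "sc s c = CF (s * p0 c) (s * p1 c) (s * p2 c) (s * q0 c) (s * q1 c) (s * q2 c)"

lemma Ph_sc: "Ph (sc s c) x y = s * Ph c x y" and Qh_sc: "Qh (sc s c) x y = s * Qh c x y"
  by (simp_all add: sc_def Ph_def Qh_def algebra_simps)

lemma rm_scale: assumes "s \<noteq> 0" shows "rm (sc s c) = rm c"
proof
  fix w show "rm (sc s c) w = rm c w"
  proof (cases w)
    case None thus ?thesis using assms by (simp add: rm_def sc_def)
  next
    case (Some z) thus ?thesis using assms by (simp add: rm_def Ph_sc Qh_sc)
  qed
qed

definition conjc :: "complex \<Rightarrow> complex \<Rightarrow> complex \<Rightarrow> complex \<Rightarrow> cf \<Rightarrow> cf" where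
  "conjc a b c d f = (let
     A2 = p2 f * d^2 - p1 f * c * d + p0 f * c^2;
     A1 = - 2 * b * d * p2 f + (a * d + b * c) * p1 f - 2 * a * c * p0 f;
     A0 = b^2 * p2 f - a * b * p1 f + a^2 * p0 f;
     B2 = q2 f * d^2 - q1 f * c * d + q0 f * c^2;
     B1 = - 2 * b * d * q2 f + (a * d + b * c) * q1 f - 2 * a * c * q0 f;
     B0 = b^2 * q2 f - a * b * q1 f + a^2 * q0 f
   in CF (a * A0 + b * B0) (a * A1 + b * B1) (a * A2 + b * B2)
         (c * A0 + d * B0) (c * A1 + d * B1) (c * A2 + d * B2))"

lemma Ph_conj: "Ph (conjc a b c d f) x y =
    a * Ph f (d * x - b * y) (- c * x + a * y) + b * Qh f (d * x - b * y) (- c * x + a * y)"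
  by (simp add: conjc_def Let_def Ph_def Qh_def power2_eq_square algebra_simps)

lemma Qh_conj: "Qh (conjc a b c d f) x y =
    c * Ph f (d * x - b * y) (- c * x + a * y) + d * Qh f (d * x - b * y) (- c * x + a * y)"
  by (simp add: conjc_def Let_def Ph_def Qh_def power2_eq_square algebra_simps)

lemma conj_rm:
  assumes det: "a * d - b * c \<noteq> 0" and nd: "nd f"
  shows "moebius a b c d \<circ> rm f \<circ> moebius d (- b) (- c) a = rm (conjc a b c d f)"
    and "nd (conjc a b c d f)"
proof -
  have det': "d * a - (- b) * (- c) \<noteq> 0" using det by (simp add: algebra_simps)
  have nz1: "(d * x - b * y, - c * x + a * y) \<noteq> (0, 0)" if "(x, y) \<noteq> (0, 0)" for x y
    using lin_nz[OF det' that] by (simp add: algebra_simps)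
  have nz2: "(Ph (conjc a b c d f) x y, Qh (conjc a b c d f) x y) \<noteq> (0, 0)"
    if "(x, y) \<noteq> (0, 0)" for x y
    unfolding Ph_conj Qh_conj using lin_nz[OF det nd_nz[OF nd nz1[OF that]]] .
  show "nd (conjc a b c d f)" unfolding nd_def using nz2 by blast
  show "moebius a b c d \<circ> rm f \<circ> moebius d (- b) (- c) a = rm (conjc a b c d f)"
  proof (rule ext_proj)
    fix x y :: complex assume xy: "(x, y) \<noteq> (0, 0)"
    have "moebius d (- b) (- c) a (proj x y) = proj (d * x - b * y) (- c * x + a * y)"
      using moeb_proj[OF det' xy] by (simp add: algebra_simps)
    moreover have "rm f (proj (d * x - b * y) (- c * x + a * y)) =
        proj (Ph f (d * x - b * y) (- c * x + a * y)) (Qh f (d * x - b * y) (- c * x + a * y))"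
      using rm_proj[OF nd nz1[OF xy]] .
    moreover have "moebius a b c d (proj (Ph f (d * x - b * y) (- c * x + a * y)) (Qh f (d * x - b * y) (- c * x + a * y)))
       = proj (Ph (conjc a b c d f) x y) (Qh (conjc a b c d f) x y)"
      unfolding Ph_conj Qh_conj using moeb_proj[OF det nd_nz[OF nd nz1[OF xy]]] .
    moreover have "rm (conjc a b c d f) (proj x y) = proj (Ph (conjc a b c d f) x y) (Qh (conjc a b c d f) x y)"
      using rm_proj[OF _ xy] nz2 unfolding nd_def by blast
    ultimately show "(moebius a b c d \<circ> rm f \<circ> moebius d (- b) (- c) a) (proj x y) =
        rm (conjc a b c d f) (proj x y)" by simp
  qed
qed

lemma fix_iff:
  assumes "nd f" "(x, y) \<noteq> (0, 0)"
  shows "rm f (proj x y) = proj x y \<longleftrightarrow> Ph f x y * y = Qh f x y * x"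
  using rm_proj[OF assms] proj_eq[OF nd_nz[OF assms] assms(2)] by simp

lemma fixpts_conj:
  assumes "bij k"
  shows "fixpts (k \<circ> f \<circ> inv k) = k ` fixpts f"
proof -
  have "(k \<circ> f \<circ> inv k) p = p \<longleftrightarrow> f (inv k p) = inv k p" for p
    using assms by (metis bij_inv_eq_iff comp_apply)
  hence "fixpts (k \<circ> f \<circ> inv k) = {p. inv k p \<in> fixpts f}" by (auto simp: fixpts_def)
  also have "\<dots> = k ` fixpts f" using assms
    by (auto simp: bij_inv_eq_iff image_iff) (metis bij_inv_eq_iff)+
  finally show ?thesis .
qed

definition J :: "cf \<Rightarrow> complex \<Rightarrow> complex \<Rightarrow> complex" where
  "J f x y = (2 * p2 f * x + p1 f * y) * (q1 f * x + 2 * q0 f * y)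
           - (p1 f * x + 2 * p0 f * y) * (2 * q2 f * x + q1 f * y)"

definition lam :: "cf \<Rightarrow> complex \<Rightarrow> complex \<Rightarrow> complex" where
  "lam f x y = (if y \<noteq> 0 then Qh f x y / y else Ph f x y / x)"

definition muh :: "cf \<Rightarrow> complex \<Rightarrow> complex \<Rightarrow> complex" where
  "muh f x y = J f x y / (2 * (lam f x y)^2)"

lemma mult_fin:
  assumes nd: "nd f" and fx: "rm f (Some z) = Some z"
  shows "multiplier (rm f) (Some z) = muh f z 1"
proof -
  have Qz: "Qh f z 1 \<noteq> 0" using fx by (auto simp: rm_def split: if_splits)
  have cont: "continuous_on UNIV (\<lambda>w. Qh f w 1)" unfolding Qh_def by (intro continuous_intros)
  have op: "open {w. Qh f w 1 \<noteq> 0}" using open_Collect_neq[OF cont continuous_on_const] .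
  have ev: "eventually (\<lambda>w. the (rm f (Some w)) = Ph f w 1 / Qh f w 1) (nhds z)"
    unfolding eventually_nhds
    by (rule exI[of _ "{w. Qh f w 1 \<noteq> 0}"]) (use op Qz in \<open>auto simp: rm_def\<close>)
  have D: "((\<lambda>w. Ph f w 1 / Qh f w 1) has_field_derivative
     ((2 * p2 f * z + p1 f) * Qh f z 1 - Ph f z 1 * (2 * q2 f * z + q1 f)) / (Qh f z 1 * Qh f z 1)) (at z)"
    unfolding Ph_def Qh_def using Qz unfolding Qh_def
    by (auto intro!: derivative_eq_intros simp: power2_eq_square algebra_simps)
  have "multiplier (rm f) (Some z) = deriv (\<lambda>w. Ph f w 1 / Qh f w 1) z"
    unfolding multiplier_def using deriv_cong_ev[OF ev refl] by simp
  also have "\<dots> = ((2 * p2 f * z + p1 f) * Qh f z 1 - Ph f z 1 * (2 * q2 f * z + q1 f)) / (Qh f z 1 * Qh f z 1)"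
    using DERIV_imp_deriv[OF D] .
  also have "\<dots> = muh f z 1"
    unfolding muh_def lam_def J_def using Qz
    by (simp add: field_simps power2_eq_square) (simp add: Ph_def Qh_def algebra_simps power2_eq_square)
  finally show ?thesis .
qed

lemma mult_inf:
  assumes nd: "nd f" and fx: "rm f None = None"
  shows "multiplier (rm f) None = muh f 1 0"
proof -
  have q2: "q2 f = 0" using fx by (auto simp: rm_def split: if_splits)
  have p2: "p2 f \<noteq> 0"
  proof
    assume "p2 f = 0"
    hence "Ph f 1 0 = 0 \<and> Qh f 1 0 = 0" using q2 by (simp add: Ph_def Qh_def)
    thus False using nd unfolding nd_def by (metis one_neq_zero)
  qed
  have eq: "chart_inf (rm f (chart_inf_inv w)) =
      (q2 f + q1 f * w + q0 f * w^2) / (p2 f + p1 f * w + p0 f * w^2)" for w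
  proof (cases "w = 0")
    case True thus ?thesis using q2 by (simp add: chart_inf_def chart_inf_inv_def rm_def)
  next
    case False
    have e1: "q2 f + q1 f * w + q0 f * w^2 = w^2 * Qh f (1 / w) 1"
      and e2: "p2 f + p1 f * w + p0 f * w^2 = w^2 * Ph f (1 / w) 1"
      using False by (simp_all add: Ph_def Qh_def field_simps power2_eq_square)
    show ?thesis using False unfolding e1 e2
      by (simp add: chart_inf_def chart_inf_inv_def rm_def)
  qed
  have D: "((\<lambda>w. (q2 f + q1 f * w + q0 f * w^2) / (p2 f + p1 f * w + p0 f * w^2)) has_field_derivative
      ((q1 f + 2 * q0 f * 0) * (p2 f + p1 f * 0 + p0 f * 0^2) - (q2 f + q1 f * 0 + q0 f * 0^2) * (p1 f + 2 * p0 f * 0))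
       / ((p2 f + p1 f * 0 + p0 f * 0^2) * (p2 f + p1 f * 0 + p0 f * 0^2))) (at 0)"
    using p2 by (auto intro!: derivative_eq_intros simp: power2_eq_square)
  have "multiplier (rm f) None = deriv (\<lambda>w. (q2 f + q1 f * w + q0 f * w^2) / (p2 f + p1 f * w + p0 f * w^2)) 0"
    unfolding multiplier_def eq by simp
  also have "\<dots> = q1 f / p2 f"
    using DERIV_imp_deriv[OF D] q2 p2 by (simp add: field_simps power2_eq_square)
  also have "\<dots> = muh f 1 0"
    unfolding muh_def lam_def J_def Ph_def using p2 q2 by (simp add: field_simps power2_eq_square)
  finally show ?thesis .
qed

lemma mult_rm:
  assumes "nd f" "rm f p = p"
  shows "multiplier (rm f) p = muh f (fst (rep p)) (snd (rep p))"
  using assms mult_fin mult_inf by (cases p) (auto simp: rep_def)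

lemma J_conj: "J (conjc a b c d f) (a * x + b * y) (c * x + d * y) = (a * d - b * c)^4 * J f x y"
  unfolding J_def conjc_def Let_def by (simp add: algebra_simps power2_eq_square power4_eq_xxxx)

lemma lam_unique:
  assumes "(x, y) \<noteq> (0, 0)" "Ph f x y = L * x" "Qh f x y = L * y"
  shows "lam f x y = L"
  using assms by (auto simp: lam_def)

lemma fixed_lam:
  assumes "(x, y) \<noteq> (0, 0)" "Ph f x y * y = Qh f x y * x"
  shows "Ph f x y = lam f x y * x" "Qh f x y = lam f x y * y"
  using assms by (auto simp: lam_def field_simps)

lemma Ph_scale: "Ph f (t * x) (t * y) = t^2 * Ph f x y"
  and Qh_scale: "Qh f (t * x) (t * y) = t^2 * Qh f x y"
  and J_scale: "J f (t * x) (t * y) = t^2 * J f x y"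
  by (simp_all add: Ph_def Qh_def J_def algebra_simps power2_eq_square)

lemma muh_scale:
  assumes "(x, y) \<noteq> (0, 0)" "Ph f x y * y = Qh f x y * x" "t \<noteq> 0"
  shows "muh f (t * x) (t * y) = muh f x y"
proof -
  have "lam f (t * x) (t * y) = t * lam f x y"
    using assms fixed_lam[OF assms(1,2)]
    by (intro lam_unique) (auto simp: Ph_scale Qh_scale power2_eq_square)
  thus ?thesis using assms by (simp add: muh_def J_scale power2_eq_square)
qed

lemma muh_conj:
  assumes det: "a * d - b * c \<noteq> 0" and xy: "(x, y) \<noteq> (0, 0)" and fx: "Ph f x y * y = Qh f x y * x"
  shows "muh (conjc a b c d f) (a * x + b * y) (c * x + d * y) = muh f x y"
proof -
  let ?D = "a * d - b * c"
  have s1: "d * (a * x + b * y) - b * (c * x + d * y) = ?D * x"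
   and s2: "- c * (a * x + b * y) + a * (c * x + d * y) = ?D * y" by (simp_all add: algebra_simps)
  have "lam (conjc a b c d f) (a * x + b * y) (c * x + d * y) = ?D^2 * lam f x y"
  proof (rule lam_unique[OF lin_nz[OF det xy]])
    have "Ph (conjc a b c d f) (a * x + b * y) (c * x + d * y) = a * Ph f (?D * x) (?D * y) + b * Qh f (?D * x) (?D * y)"
      by (simp only: Ph_conj s1 s2)
    also have "\<dots> = ?D^2 * lam f x y * (a * x + b * y)"
      by (simp only: Ph_scale Qh_scale fixed_lam[OF xy fx]) (simp add: algebra_simps)
    finally show "Ph (conjc a b c d f) (a * x + b * y) (c * x + d * y) = ?D^2 * lam f x y * (a * x + b * y)" .
    have "Qh (conjc a b c d f) (a * x + b * y) (c * x + d * y) = c * Ph f (?D * x) (?D * y) + d * Qh f (?D * x) (?D * y)"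
      by (simp only: Qh_conj s1 s2)
    also have "\<dots> = ?D^2 * lam f x y * (c * x + d * y)"
      by (simp only: Ph_scale Qh_scale fixed_lam[OF xy fx]) (simp add: algebra_simps)
    finally show "Qh (conjc a b c d f) (a * x + b * y) (c * x + d * y) = ?D^2 * lam f x y * (c * x + d * y)" .
  qed
  thus ?thesis using det by (simp add: muh_def J_conj power2_eq_square power4_eq_xxxx)
qed

lemma rep_proj:
  assumes "(x, y) \<noteq> (0, 0)"
  shows "\<exists>s. s \<noteq> 0 \<and> rep (proj x y) = (s * x, s * y)"
proof (cases "y = 0")
  case True thus ?thesis using assms by (intro exI[of _ "1 / x"]) (auto simp: rep_def proj_def)
next
  case False thus ?thesis by (intro exI[of _ "1 / y"]) (auto simp: rep_def proj_def)
qed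

lemma fixed_rep:
  assumes "nd f" "rm f p = p"
  shows "Ph f (fst (rep p)) (snd (rep p)) * snd (rep p) = Qh f (fst (rep p)) (snd (rep p)) * fst (rep p)"
  using fix_iff[OF assms(1), of "fst (rep p)" "snd (rep p)"] rep_nz[of p] assms(2) by (simp add: proj_rep)

lemma mult_conj:
  assumes det: "a * d - b * c \<noteq> 0" and nd: "nd f" and fx: "rm f p = p"
  shows "multiplier (rm (conjc a b c d f)) (moebius a b c d p) = multiplier (rm f) p"
proof -
  obtain x y where r: "rep p = (x, y)" by fastforce
  have xy: "(x, y) \<noteq> (0, 0)" using rep_nz[of p] r by simp
  have p: "p = proj x y" using proj_rep[of p] r by simp
  have fxy: "Ph f x y * y = Qh f x y * x" using fixed_rep[OF nd fx] r by simp
  let ?X = "a * x + b * y" and ?Y = "c * x + d * y"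
  have XY: "(?X, ?Y) \<noteq> (0, 0)" using lin_nz[OF det xy] .
  have Kp: "moebius a b c d p = proj ?X ?Y" using moeb_proj[OF det xy] p by simp
  have nd': "nd (conjc a b c d f)" using conj_rm(2)[OF det nd] .
  have "inv (moebius a b c d) (moebius a b c d p) = p"
    using moeb_bij[OF det] by (simp add: bij_is_inj)
  hence fx': "rm (conjc a b c d f) (moebius a b c d p) = moebius a b c d p"
    using conj_rm(1)[OF det nd, symmetric] fx by (simp add: moeb_inv[OF det, symmetric])
  obtain s where s: "s \<noteq> 0" "rep (moebius a b c d p) = (s * ?X, s * ?Y)"
    using rep_proj[OF XY] Kp by auto
  have fXY: "Ph (conjc a b c d f) ?X ?Y * ?Y = Qh (conjc a b c d f) ?X ?Y * ?X"
    using fix_iff[OF nd' XY] fx' Kp by simp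
  have "multiplier (rm (conjc a b c d f)) (moebius a b c d p) = muh (conjc a b c d f) (s * ?X) (s * ?Y)"
    using mult_rm[OF nd' fx'] s by simp
  also have "\<dots> = muh (conjc a b c d f) ?X ?Y" using muh_scale[OF XY fXY s(1)] .
  also have "\<dots> = muh f x y" using muh_conj[OF det xy fxy] .
  also have "\<dots> = multiplier (rm f) p" using mult_rm[OF nd fx] r by simp
  finally show ?thesis .
qed

lemma MoebE:
  assumes "g \<in> Moeb"
  obtains a b c d where "a * d - b * c \<noteq> 0" "g = moebius a b c d"
  using assms unfolding Moeb_def by blast

lemma moeb_Moeb: "a * d - b * c \<noteq> 0 \<Longrightarrow> moebius a b c d \<in> Moeb"
  unfolding Moeb_def by blast

lemma aut_maps: "g \<in> Aut f \<Longrightarrow> p \<in> fixpts f \<Longrightarrow> g p \<in> fixpts f"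
proof -
  assume g: "g \<in> Aut f" and p: "p \<in> fixpts f"
  have "(g \<circ> f) p = (f \<circ> g) p" using g Aut_iff by metis
  thus "g p \<in> fixpts f" using p by (simp add: fixpts_def)
qed

lemma aut_fix:
  assumes "g \<in> Aut f" "finite (fixpts f)"
  shows "g ` fixpts f = fixpts f"
proof -
  have "inj_on g (fixpts f)" using assms(1) Aut_iff Moeb_bij bij_is_inj inj_on_subset by blast
  moreover have "g ` fixpts f \<subseteq> fixpts f" using aut_maps[OF assms(1)] by blast
  ultimately show ?thesis using assms(2) endo_inj_surj by blast
qed

lemma aut_mult:
  assumes nd: "nd f" and g: "g \<in> Aut (rm f)" and p: "p \<in> fixpts (rm f)"
  shows "multiplier (rm f) (g p) = multiplier (rm f) p"
proof -
  obtain a b c d where det: "a * d - b * c \<noteq> 0" and gd: "g = moebius a b c d"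
    using g unfolding Aut_def by (auto elim: MoebE)
  have "g \<circ> rm f \<circ> inv g = rm f" using g unfolding Aut_def by auto
  hence "rm (conjc a b c d f) = rm f" using conj_rm(1)[OF det nd] gd moeb_inv[OF det] by simp
  thus ?thesis using mult_conj[OF det nd, of p] p gd by (simp add: fixpts_def)
qed

lemma aut_transport:
  assumes K: "K \<in> Moeb" and g: "g \<in> Aut f"
  shows "K \<circ> g \<circ> inv K \<in> Aut (K \<circ> f \<circ> inv K)"
proof -
  have bK: "bij K" using K Moeb_bij by blast
  have i1: "inv K \<circ> K = id" using bK bij_is_inj inj_iff by blast
  have gm: "g \<in> Moeb" and gc: "g \<circ> f = f \<circ> g" using g Aut_iff by auto
  have "K \<circ> g \<circ> inv K \<in> Moeb" using Moeb_comp[OF Moeb_comp[OF K gm] Moeb_inv[OF K]] .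
  moreover have "(K \<circ> g \<circ> inv K) \<circ> (K \<circ> f \<circ> inv K) = K \<circ> (g \<circ> f) \<circ> inv K"
    by (simp add: fun_eq_iff) (metis i1 comp_apply id_apply)
  moreover have "(K \<circ> f \<circ> inv K) \<circ> (K \<circ> g \<circ> inv K) = K \<circ> (f \<circ> g) \<circ> inv K"
    by (simp add: fun_eq_iff) (metis i1 comp_apply id_apply)
  ultimately show ?thesis using gc Aut_iff by auto
qed

lemma aut_transport_iff:
  assumes K: "K \<in> Moeb"
  shows "g \<in> Aut f \<longleftrightarrow> K \<circ> g \<circ> inv K \<in> Aut (K \<circ> f \<circ> inv K)"
proof
  assume "g \<in> Aut f" thus "K \<circ> g \<circ> inv K \<in> Aut (K \<circ> f \<circ> inv K)" using aut_transport[OF K] by blast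
next
  assume h: "K \<circ> g \<circ> inv K \<in> Aut (K \<circ> f \<circ> inv K)"
  have bK: "bij K" using K Moeb_bij by blast
  have i1: "inv K \<circ> K = id" using bK bij_is_inj inj_iff by blast
  have iK: "inv (inv K) = K" using bK inv_inv_eq by blast
  have e: "inv K \<circ> (K \<circ> h \<circ> inv K) \<circ> inv (inv K) = h" for h
    unfolding iK by (simp add: fun_eq_iff) (metis i1 comp_apply id_apply)
  show "g \<in> Aut f" using aut_transport[OF Moeb_inv[OF K] h] unfolding e .
qed

lemma rep_indep:
  assumes "p \<noteq> q"
  shows "fst (rep p) * snd (rep q) \<noteq> snd (rep p) * fst (rep q)"
proof -
  have "(fst (rep p), snd (rep p)) \<noteq> (0, 0)" "(fst (rep q), snd (rep q)) \<noteq> (0, 0)"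
    using rep_nz[of p] rep_nz[of q] by simp_all
  from proj_eq[OF this] show ?thesis using assms by (simp add: proj_rep)
qed

lemma rep_nz2: "(fst (rep p), snd (rep p)) \<noteq> (0, 0)"
  using rep_nz[of p] by simp

lemma moeb_rep:
  assumes "a * d - b * c \<noteq> 0"
  shows "moebius a b c d p = proj (a * fst (rep p) + b * snd (rep p)) (c * fst (rep p) + d * snd (rep p))"
  using moeb_proj[OF assms rep_nz2[of p]] by (simp add: proj_rep)

lemma mob2:
  assumes "p \<noteq> q"
  shows "\<exists>a b c d. a * d - b * c \<noteq> 0 \<and> moebius a b c d p = Some 0 \<and> moebius a b c d q = None"
proof -
  obtain xp yp where rp: "rep p = (xp, yp)" by fastforce
  obtain xq yq where rq: "rep q = (xq, yq)" by fastforce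
  have D: "xp * yq \<noteq> yp * xq" using rep_indep[OF assms] rp rq by simp
  have det: "yp * (- xq) - (- xp) * yq \<noteq> 0" using D by (simp add: algebra_simps)
  have "moebius yp (- xp) yq (- xq) p = proj (yp * xp + - xp * yp) (yq * xp + - xq * yp)"
    using moeb_proj[OF det, of xp yp] rep_nz[of p] rp proj_rep[of p] by simp
  also have "\<dots> = Some 0" using D by (simp add: proj_def algebra_simps)
  finally have 1: "moebius yp (- xp) yq (- xq) p = Some 0" .
  have "moebius yp (- xp) yq (- xq) q = proj (yp * xq + - xp * yq) (yq * xq + - xq * yq)"
    using moeb_proj[OF det, of xq yq] rep_nz[of q] rq proj_rep[of q] by simp
  also have "\<dots> = None" by (simp add: proj_def algebra_simps)
  finally have 2: "moebius yp (- xp) yq (- xq) q = None" .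
  show ?thesis using det 1 2 by blast
qed

lemma mob3:
  assumes "w1 \<noteq> w2" "w1 \<noteq> w3" "w2 \<noteq> w3"
  shows "\<exists>a b c d. a * d - b * c \<noteq> 0 \<and> moebius a b c d w1 = Some 0 \<and>
     moebius a b c d w2 = Some 1 \<and> moebius a b c d w3 = None"
proof -
  obtain x1 y1 where r1: "rep w1 = (x1, y1)" by fastforce
  obtain x2 y2 where r2: "rep w2 = (x2, y2)" by fastforce
  obtain x3 y3 where r3: "rep w3 = (x3, y3)" by fastforce
  have D12: "x1 * y2 \<noteq> y1 * x2" using rep_indep[OF assms(1)] r1 r2 by simp
  have D13: "x1 * y3 \<noteq> y1 * x3" using rep_indep[OF assms(2)] r1 r3 by simp
  have D23: "x2 * y3 \<noteq> y2 * x3" using rep_indep[OF assms(3)] r2 r3 by simp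
  define s where "s = y3 * x2 - x3 * y2"
  define t where "t = y1 * x2 - x1 * y2"
  have s0: "s \<noteq> 0" using D23 by (simp add: s_def algebra_simps)
  have t0: "t \<noteq> 0" using D12 by (simp add: t_def algebra_simps)
  have det: "(s * y1) * (- t * x3) - (- s * x1) * (t * y3) \<noteq> 0"
  proof -
    have "(s * y1) * (- t * x3) - (- s * x1) * (t * y3) = s * t * (x1 * y3 - y1 * x3)"
      by (simp add: algebra_simps)
    thus ?thesis using s0 t0 D13 by simp
  qed
  let ?M = "moebius (s * y1) (- s * x1) (t * y3) (- t * x3)"
  have e: "?M p = proj (s * y1 * fst (rep p) + - s * x1 * snd (rep p)) (t * y3 * fst (rep p) + - t * x3 * snd (rep p))" for p
    using moeb_rep[OF det] by simp
  have 1: "?M w1 = Some 0" using e[of w1] r1 s0 t0 D13 by (simp add: proj_def algebra_simps)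
  have 3: "?M w3 = None" using e[of w3] r3 by (simp add: proj_def algebra_simps)
  have 2: "?M w2 = Some 1"
  proof -
    have "s * y1 * x2 + - s * x1 * y2 = s * t" "t * y3 * x2 + - t * x3 * y2 = s * t"
      by (simp_all add: s_def t_def algebra_simps)
    thus ?thesis using e[of w2] r2 s0 t0 by (simp add: proj_def)
  qed
  show ?thesis using det 1 2 3 by blast
qed

definition qv :: "complex \<Rightarrow> complex \<Rightarrow> complex \<Rightarrow> sphere \<Rightarrow> complex" where
  "qv \<alpha> \<beta> \<gamma> w = \<alpha> * (fst (rep w))^2 + \<beta> * fst (rep w) * snd (rep w) + \<gamma> * (snd (rep w))^2"

lemma qv_Some: "qv \<alpha> \<beta> \<gamma> (Some z) = \<alpha> * z^2 + \<beta> * z + \<gamma>"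
  and qv_None: "qv \<alpha> \<beta> \<gamma> None = \<alpha>"
  by (simp_all add: qv_def rep_def)

lemma lin2:
  fixes \<beta> \<gamma> :: complex
  assumes "z1 \<noteq> z2" "\<beta> * z1 + \<gamma> = 0" "\<beta> * z2 + \<gamma> = 0"
  shows "\<beta> = 0 \<and> \<gamma> = 0"
proof -
  have "\<beta> * (z1 - z2) = (\<beta> * z1 + \<gamma>) - (\<beta> * z2 + \<gamma>)" by (simp add: algebra_simps)
  hence "\<beta> * (z1 - z2) = 0" using assms by simp
  hence "\<beta> = 0" using assms by simp
  thus ?thesis using assms by simp
qed

lemma quad3:
  fixes \<alpha> \<beta> \<gamma> :: complex
  assumes "z1 \<noteq> z2" "z1 \<noteq> z3" "z2 \<noteq> z3"
    "\<alpha> * z1^2 + \<beta> * z1 + \<gamma> = 0" "\<alpha> * z2^2 + \<beta> * z2 + \<gamma> = 0" "\<alpha> * z3^2 + \<beta> * z3 + \<gamma> = 0"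
  shows "\<alpha> = 0 \<and> \<beta> = 0 \<and> \<gamma> = 0"
proof -
  have "(z1 - z2) * (\<alpha> * (z1 + z2) + \<beta>) = (\<alpha> * z1^2 + \<beta> * z1 + \<gamma>) - (\<alpha> * z2^2 + \<beta> * z2 + \<gamma>)"
    by (simp add: algebra_simps power2_eq_square)
  hence "(z1 - z2) * (\<alpha> * (z1 + z2) + \<beta>) = 0" using assms by simp
  hence a: "\<alpha> * (z1 + z2) + \<beta> = 0" using assms by simp
  have "(z1 - z3) * (\<alpha> * (z1 + z3) + \<beta>) = (\<alpha> * z1^2 + \<beta> * z1 + \<gamma>) - (\<alpha> * z3^2 + \<beta> * z3 + \<gamma>)"
    by (simp add: algebra_simps power2_eq_square)
  hence "(z1 - z3) * (\<alpha> * (z1 + z3) + \<beta>) = 0" using assms by simp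
  hence b: "\<alpha> * (z1 + z3) + \<beta> = 0" using assms by simp
  have "\<alpha> * (z2 - z3) = (\<alpha> * (z1 + z2) + \<beta>) - (\<alpha> * (z1 + z3) + \<beta>)" by (simp add: algebra_simps)
  hence "\<alpha> * (z2 - z3) = 0" using a b by simp
  hence a0: "\<alpha> = 0" using assms(3) by simp
  have "\<beta> * z1 + \<gamma> = 0" "\<beta> * z2 + \<gamma> = 0" using assms(4,5) a0 by simp_all
  thus ?thesis using lin2[OF assms(1)] a0 by blast
qed

lemma qv3_aux:
  assumes "z2 \<noteq> z3" "qv \<alpha> \<beta> \<gamma> None = 0" "qv \<alpha> \<beta> \<gamma> (Some z2) = 0" "qv \<alpha> \<beta> \<gamma> (Some z3) = 0"
  shows "\<alpha> = 0 \<and> \<beta> = 0 \<and> \<gamma> = 0"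
  using assms lin2[of z2 z3 \<beta> \<gamma>] by (simp add: qv_Some qv_None)

lemma qv3:
  assumes "w1 \<noteq> w2" "w1 \<noteq> w3" "w2 \<noteq> w3"
    "qv \<alpha> \<beta> \<gamma> w1 = 0" "qv \<alpha> \<beta> \<gamma> w2 = 0" "qv \<alpha> \<beta> \<gamma> w3 = 0"
  shows "\<alpha> = 0 \<and> \<beta> = 0 \<and> \<gamma> = 0"
proof (cases w1)
  case None
  then obtain z2 z3 where z: "w2 = Some z2" "w3 = Some z3" using assms(1,2) by (cases w2; cases w3) auto
  have "z2 \<noteq> z3" using assms(3) z by blast
  moreover have "qv \<alpha> \<beta> \<gamma> None = 0" using assms(4) None by blast
  moreover have "qv \<alpha> \<beta> \<gamma> (Some z2) = 0" using assms(5) z by blast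
  moreover have "qv \<alpha> \<beta> \<gamma> (Some z3) = 0" using assms(6) z by blast
  ultimately show ?thesis by (rule qv3_aux)
next
  case (Some z1)
  note s1 = Some
  show ?thesis
  proof (cases w2)
    case None
    then obtain z3 where z: "w3 = Some z3" using assms(3) by (cases w3) auto
    have "z1 \<noteq> z3" using assms(2) z s1 by blast
    moreover have "qv \<alpha> \<beta> \<gamma> None = 0" using assms(5) None by blast
    moreover have "qv \<alpha> \<beta> \<gamma> (Some z1) = 0" using assms(4) s1 by blast
    moreover have "qv \<alpha> \<beta> \<gamma> (Some z3) = 0" using assms(6) z by blast
    ultimately show ?thesis by (rule qv3_aux)
  next
    case (Some z2)
    note s2 = Some
    show ?thesis
    proof (cases w3)
      case None
      have "z1 \<noteq> z2" using assms(1) s1 s2 by blast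
      moreover have "qv \<alpha> \<beta> \<gamma> None = 0" using assms(6) None by blast
      moreover have "qv \<alpha> \<beta> \<gamma> (Some z1) = 0" using assms(4) s1 by blast
      moreover have "qv \<alpha> \<beta> \<gamma> (Some z2) = 0" using assms(5) s2 by blast
      ultimately show ?thesis by (rule qv3_aux)
    next
      case (Some z3)
      have "z1 \<noteq> z2" "z1 \<noteq> z3" "z2 \<noteq> z3" using assms(1-3) s1 s2 Some by blast+
      moreover have "\<alpha> * z1^2 + \<beta> * z1 + \<gamma> = 0" using assms(4) s1 qv_Some by metis
      moreover have "\<alpha> * z2^2 + \<beta> * z2 + \<gamma> = 0" using assms(5) s2 qv_Some by metis
      moreover have "\<alpha> * z3^2 + \<beta> * z3 + \<gamma> = 0" using assms(6) Some qv_Some by metis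
      ultimately show ?thesis by (rule quad3)
    qed
  qed
qed

lemma moeb_fixed_qv:
  assumes det: "a * d - b * c \<noteq> 0" and fx: "moebius a b c d w = w"
  shows "qv c (d - a) (- b) w = 0"
proof -
  obtain x y where r: "rep w = (x, y)" by fastforce
  have xy: "(x, y) \<noteq> (0, 0)" using rep_nz[of w] r by simp
  have "proj (a * x + b * y) (c * x + d * y) = proj x y"
    using moeb_rep[OF det, of w] fx proj_rep[of w] r by simp
  hence "(a * x + b * y) * y = (c * x + d * y) * x" using proj_eq[OF lin_nz[OF det xy] xy] by simp
  thus ?thesis using r by (simp add: qv_def algebra_simps power2_eq_square)
qed

lemma moeb_fix3:
  assumes det: "a * d - b * c \<noteq> 0" and d: "w1 \<noteq> w2" "w1 \<noteq> w3" "w2 \<noteq> w3"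
    and fx: "moebius a b c d w1 = w1" "moebius a b c d w2 = w2" "moebius a b c d w3 = w3"
  shows "moebius a b c d = id"
proof -
  have "c = 0 \<and> d - a = 0 \<and> - b = 0"
    using qv3[OF d moeb_fixed_qv[OF det fx(1)] moeb_fixed_qv[OF det fx(2)] moeb_fixed_qv[OF det fx(3)]] .
  hence e: "c = 0" "d = a" "b = 0" by auto
  hence a0: "a \<noteq> 0" using det by auto
  have "moebius a b c d = moebius (a * 1) (a * 0) (a * 0) (a * 1)" using e by simp
  also have "\<dots> = id" unfolding moeb_scale[OF a0] by (rule moeb_id)
  finally show ?thesis .
qed

lemma Moeb_agree3:
  assumes g1: "g1 \<in> Moeb" and g2: "g2 \<in> Moeb" and d: "w1 \<noteq> w2" "w1 \<noteq> w3" "w2 \<noteq> w3"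
    and e: "g1 w1 = g2 w1" "g1 w2 = g2 w2" "g1 w3 = g2 w3"
  shows "g1 = g2"
proof -
  have b2: "bij g2" using g2 Moeb_bij by blast
  have hM: "inv g2 \<circ> g1 \<in> Moeb" using Moeb_comp[OF Moeb_inv[OF g2] g1] .
  then obtain a b c d where det: "a * d - b * c \<noteq> 0" and h: "inv g2 \<circ> g1 = moebius a b c d"
    by (rule MoebE)
  have fx: "moebius a b c d w = w" if "g1 w = g2 w" for w
    using that h[symmetric] b2 by (simp add: bij_is_inj)
  have "inv g2 \<circ> g1 = id" using moeb_fix3[OF det d fx[OF e(1)] fx[OF e(2)] fx[OF e(3)]] h by simp
  hence "g2 \<circ> (inv g2 \<circ> g1) = g2" by simp
  moreover have "g2 \<circ> inv g2 = id" using b2 bij_is_surj surj_iff by blast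
  ultimately show ?thesis by (simp add: o_assoc)
qed

lemma fix_fin_iff:
  assumes "nd f"
  shows "rm f (Some z) = Some z \<longleftrightarrow> Ph f z 1 = Qh f z 1 * z"
  using fix_iff[OF assms, of z 1] by (simp add: proj_def)

lemma fix_inf_iff: "rm f None = None \<longleftrightarrow> q2 f = 0"
  by (simp add: rm_def)

lemma nd_p2:
  assumes "nd f" "q2 f = 0" shows "p2 f \<noteq> 0"
proof
  assume "p2 f = 0"
  hence "Ph f 1 0 = 0 \<and> Qh f 1 0 = 0" using assms by (simp add: Ph_def Qh_def)
  thus False using assms unfolding nd_def by (metis one_neq_zero)
qed

lemma nd_q0:
  assumes "nd f" "p0 f = 0" shows "q0 f \<noteq> 0"
proof
  assume "q0 f = 0"
  hence "Ph f 0 1 = 0 \<and> Qh f 0 1 = 0" using assms by (simp add: Ph_def Qh_def)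
  thus False using assms unfolding nd_def by (metis one_neq_zero)
qed

lemma mult0:
  assumes "nd f" "rm f (Some 0) = Some 0"
  shows "multiplier (rm f) (Some 0) = p1 f / q0 f" and "p0 f = 0" and "q0 f \<noteq> 0"
proof -
  show p0: "p0 f = 0" using assms fix_fin_iff[OF assms(1), of 0] by (simp add: Ph_def Qh_def)
  show q0: "q0 f \<noteq> 0" using nd_q0[OF assms(1) p0] .
  show "multiplier (rm f) (Some 0) = p1 f / q0 f"
    using mult_fin[OF assms] p0 q0 by (simp add: muh_def lam_def J_def Qh_def power2_eq_square)
qed

lemma multinf:
  assumes "nd f" "rm f None = None"
  shows "multiplier (rm f) None = q1 f / p2 f" and "q2 f = 0" and "p2 f \<noteq> 0"
proof -
  show q2: "q2 f = 0" using assms by (simp add: fix_inf_iff)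
  show p2: "p2 f \<noteq> 0" using nd_p2[OF assms(1) q2] .
  show "multiplier (rm f) None = q1 f / p2 f"
    using mult_inf[OF assms] p2 q2 by (simp add: muh_def lam_def J_def Ph_def power2_eq_square)
qed

lemma nf3_form:
  assumes nd: "nd f" and f0: "rm f (Some 0) = Some 0" and f1: "rm f (Some 1) = Some 1"
    and fi: "rm f None = None"
  defines "m0 \<equiv> multiplier (rm f) (Some 0)" and "mi \<equiv> multiplier (rm f) None"
  shows "rm f = rm (CF 0 m0 ((1 - m0) / (1 - mi)) 1 (mi * ((1 - m0) / (1 - mi))) 0)"
proof -
  have m0: "m0 = p1 f / q0 f" and p0: "p0 f = 0" and q0: "q0 f \<noteq> 0"
    using mult0[OF nd f0] m0_def by auto
  have mi: "mi = q1 f / p2 f" and q2: "q2 f = 0" and p2: "p2 f \<noteq> 0"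
    using multinf[OF nd fi] mi_def by auto
  have s1: "p2 f + p1 f = q1 f + q0 f"
    using fix_fin_iff[OF nd, of 1] f1 p0 q2 by (simp add: Ph_def Qh_def)
  have mi1: "mi \<noteq> 1"
  proof
    assume "mi = 1"
    hence e: "q1 f = p2 f" using mi p2 by (simp add: field_simps)
    hence e2: "p1 f = q0 f" using s1 by simp
    have "Ph f (q0 f) (- p2 f) = 0 \<and> Qh f (q0 f) (- p2 f) = 0"
      using e e2 p0 q2 by (simp add: Ph_def Qh_def power2_eq_square algebra_simps)
    thus False using nd q0 unfolding nd_def by blast
  qed
  define r where "r = p2 f / q0 f"
  have r: "r = (1 - m0) / (1 - mi)"
  proof -
    have "r + m0 = mi * r + 1" using s1 q0 p2 unfolding r_def m0 mi by (simp add: field_simps)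
    hence "r * (1 - mi) = 1 - m0" by (simp add: algebra_simps)
    thus ?thesis using mi1 by (simp add: field_simps)
  qed
  have e: "f = sc (q0 f) (CF 0 m0 r 1 (mi * r) 0)"
    using q0 p2 p0 q2 unfolding sc_def m0 mi r_def by (cases f) (simp add: field_simps)
  have "rm f = rm (sc (q0 f) (CF 0 m0 r 1 (mi * r) 0))" using e by (rule arg_cong)
  also have "\<dots> = rm (CF 0 m0 r 1 (mi * r) 0)" by (rule rm_scale[OF q0])
  finally have "rm f = rm (CF 0 m0 r 1 (mi * r) 0)" .
  thus ?thesis using r by simp
qed

lemma nf3_unique:
  assumes "nd f" "nd g"
    and "rm f (Some 0) = Some 0" "rm f (Some 1) = Some 1" "rm f None = None"
    and "rm g (Some 0) = Some 0" "rm g (Some 1) = Some 1" "rm g None = None"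
    and "multiplier (rm f) (Some 0) = multiplier (rm g) (Some 0)"
    and "multiplier (rm f) None = multiplier (rm g) None"
  shows "rm f = rm g"
  using nf3_form[OF assms(1,3,4,5)] nf3_form[OF assms(2,6,7,8)] assms(9,10) by simp

lemma conj_fix_pt:
  assumes det: "a * d - b * c \<noteq> 0" and nd: "nd f" and fx: "rm f w = w"
  shows "rm (conjc a b c d f) (moebius a b c d w) = moebius a b c d w"
proof -
  have "inv (moebius a b c d) (moebius a b c d w) = w"
    using moeb_bij[OF det] by (simp add: bij_is_inj)
  thus ?thesis
    using conj_rm(1)[OF det nd, symmetric] fx by (simp add: moeb_inv[OF det, symmetric])
qed

lemma conj_back:
  assumes det: "a * d - b * c \<noteq> 0" and nd: "nd f"
  shows "inv (moebius a b c d) \<circ> rm (conjc a b c d f) \<circ> moebius a b c d = rm f"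
proof -
  have b: "bij (moebius a b c d)" using moeb_bij[OF det] .
  have i1: "inv (moebius a b c d) \<circ> moebius a b c d = id" using b bij_is_inj inj_iff by blast
  show ?thesis unfolding conj_rm(1)[OF det nd, symmetric] moeb_inv[OF det, symmetric]
    by (simp add: fun_eq_iff) (metis i1 comp_apply id_apply)
qed

lemma uniq3:
  assumes nf: "nd f" and ng: "nd g" and d: "w1 \<noteq> w2" "w1 \<noteq> w3" "w2 \<noteq> w3"
    and Ff: "fixpts (rm f) = {w1, w2, w3}" and Fg: "fixpts (rm g) = {w1, w2, w3}"
    and m: "\<And>p. p \<in> {w1, w2, w3} \<Longrightarrow> multiplier (rm f) p = multiplier (rm g) p"
  shows "rm f = rm g"
proof -
  obtain a b c d where det: "a * d - b * c \<noteq> 0" and K1: "moebius a b c d w1 = Some 0"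
    and K2: "moebius a b c d w2 = Some 1" and K3: "moebius a b c d w3 = None"
    using mob3[OF d] by blast
  let ?K = "moebius a b c d"
  have ff: "rm f w = w" "rm g w = w" if "w \<in> {w1, w2, w3}" for w
    using that Ff Fg by (auto simp: fixpts_def)
  have fx: "rm (conjc a b c d h) (?K w) = ?K w" if "nd h" "rm h w = w" for h w
    using conj_fix_pt[OF det that] .
  have mc: "multiplier (rm (conjc a b c d h)) (?K w) = multiplier (rm h) w" if "nd h" "rm h w = w" for h w
    using mult_conj[OF det that] .
  have "rm (conjc a b c d f) = rm (conjc a b c d g)"
  proof (rule nf3_unique)
    show "nd (conjc a b c d f)" "nd (conjc a b c d g)" using conj_rm(2)[OF det] nf ng by auto
    show "rm (conjc a b c d f) (Some 0) = Some 0" using fx[OF nf ff(1)[of w1]] K1 by simp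
    show "rm (conjc a b c d f) (Some 1) = Some 1" using fx[OF nf ff(1)[of w2]] K2 by simp
    show "rm (conjc a b c d f) None = None" using fx[OF nf ff(1)[of w3]] K3 by simp
    show "rm (conjc a b c d g) (Some 0) = Some 0" using fx[OF ng ff(2)[of w1]] K1 by simp
    show "rm (conjc a b c d g) (Some 1) = Some 1" using fx[OF ng ff(2)[of w2]] K2 by simp
    show "rm (conjc a b c d g) None = None" using fx[OF ng ff(2)[of w3]] K3 by simp
    show "multiplier (rm (conjc a b c d f)) (Some 0) = multiplier (rm (conjc a b c d g)) (Some 0)"
      using mc[OF nf ff(1)[of w1]] mc[OF ng ff(2)[of w1]] m[of w1] K1 by simp
    show "multiplier (rm (conjc a b c d f)) None = multiplier (rm (conjc a b c d g)) None"
      using mc[OF nf ff(1)[of w3]] mc[OF ng ff(2)[of w3]] m[of w3] K3 by simp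
  qed
  thus ?thesis using conj_back[OF det nf] conj_back[OF det ng] by metis
qed

lemma id_Aut: "id \<in> Aut f"
  using id_Moeb Aut_iff by auto

lemma moeb_None: "moebius a b c d None = None \<longleftrightarrow> c = 0"
  by (simp add: moebius_def)

lemma moeb_scalar_id: "a \<noteq> 0 \<Longrightarrow> moebius a 0 0 a = id"
  using moeb_scale[of a 1 0 0 1] moeb_id by simp

lemma nf2:
  assumes nd: "nd f" and F: "fixpts (rm f) = {Some 0, None}"
  shows "Aut (rm f) = {id}"
proof -
  have f0: "rm f (Some 0) = Some 0" and fi: "rm f None = None" using F by (auto simp: fixpts_def)
  have m0: "multiplier (rm f) (Some 0) = p1 f / q0 f" and p0: "p0 f = 0" and q0: "q0 f \<noteq> 0"
    using mult0[OF nd f0] by auto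
  have mi: "multiplier (rm f) None = q1 f / p2 f" and q2: "q2 f = 0" and p2: "p2 f \<noteq> 0"
    using multinf[OF nd fi] by auto
  have nofix: "(p2 f - q1 f) * z + (p1 f - q0 f) \<noteq> 0" if z: "z \<noteq> 0" for z
  proof
    assume h: "(p2 f - q1 f) * z + (p1 f - q0 f) = 0"
    have "Ph f z 1 - Qh f z 1 * z = z * ((p2 f - q1 f) * z + (p1 f - q0 f))"
      using p0 q2 by (simp add: Ph_def Qh_def algebra_simps power2_eq_square)
    hence "Ph f z 1 = Qh f z 1 * z" using h by simp
    hence "Some z \<in> fixpts (rm f)" using fix_fin_iff[OF nd] by (simp add: fixpts_def)
    thus False using F z by simp
  qed
  have cases: "(p2 f = q1 f \<and> p1 f \<noteq> q0 f) \<or> (p2 f \<noteq> q1 f \<and> p1 f = q0 f)"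
  proof (cases "p2 f = q1 f")
    case True thus ?thesis using nofix[of 1] by auto
  next
    case False
    define z where "z = - (p1 f - q0 f) / (p2 f - q1 f)"
    have "(p2 f - q1 f) * z + (p1 f - q0 f) = 0" using False by (simp add: z_def field_simps)
    hence "z = 0" using nofix by blast
    hence "p1 f = q0 f" using False by (simp add: z_def field_simps)
    thus ?thesis using False by auto
  qed
  have key1: "p1 f / q0 f \<noteq> q1 f / p2 f"
    using cases q0 p2 by (auto simp: field_simps)
  have key2: "p2 f * q0 f - p1 f * q1 f \<noteq> 0"
  proof -
    { assume "p2 f = q1 f" "p1 f \<noteq> q0 f"
      hence "p2 f * q0 f - p1 f * q1 f = p2 f * (q0 f - p1 f)" by (simp add: algebra_simps)
      hence ?thesis using p2 \<open>p1 f \<noteq> q0 f\<close> by simp }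
    moreover
    { assume "p2 f \<noteq> q1 f" "p1 f = q0 f"
      hence "p2 f * q0 f - p1 f * q1 f = q0 f * (p2 f - q1 f)" by (simp add: algebra_simps)
      hence ?thesis using q0 \<open>p2 f \<noteq> q1 f\<close> by simp }
    ultimately show ?thesis using cases by blast
  qed
  have "g = id" if g: "g \<in> Aut (rm f)" for g
  proof -
    obtain a b c d where det: "a * d - b * c \<noteq> 0" and gd: "g = moebius a b c d"
      using g unfolding Aut_def by (auto elim: MoebE)
    have fin: "finite (fixpts (rm f))" using F by simp
    have gF: "g ` fixpts (rm f) = fixpts (rm f)" using aut_fix[OF g fin] .
    have inj: "inj g" using g Aut_iff Moeb_bij bij_is_inj by blast
    have g0F: "g (Some 0) \<in> {Some 0, None}" using gF F by blast
    have giF: "g None \<in> {Some 0, None}" using gF F by blast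
    have g00: "g (Some 0) = Some 0"
    proof (rule ccontr)
      assume "g (Some 0) \<noteq> Some 0"
      hence "g (Some 0) = None" using g0F by blast
      hence "multiplier (rm f) None = multiplier (rm f) (Some 0)"
        using aut_mult[OF nd g, of "Some 0"] F by simp
      thus False using key1 m0 mi by simp
    qed
    have "g None \<noteq> g (Some 0)" using inj by (simp add: inj_eq)
    hence gii: "g None = None" using giF g00 by auto
    have c0: "c = 0" using gii gd moeb_None by simp
    have ad: "a \<noteq> 0" "d \<noteq> 0" using det c0 by auto
    have b0: "b = 0" using g00 gd c0 ad by (simp add: moebius_def)
    have det': "a * d - 0 * 0 \<noteq> 0" using ad by simp
    have comm: "g (rm f (proj 1 1)) = rm f (g (proj 1 1))"
      using g Aut_iff by (metis comp_apply)
    have nz11: "((1::complex), (1::complex)) \<noteq> (0, 0)" by simp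
    have "g (rm f (proj 1 1)) = proj (a * Ph f 1 1 + 0 * Qh f 1 1) (0 * Ph f 1 1 + d * Qh f 1 1)"
      using rm_proj[OF nd nz11] moeb_proj[OF det' nd_nz[OF nd nz11]] gd b0 c0 by simp
    moreover have "rm f (g (proj 1 1)) = proj (Ph f a d) (Qh f a d)"
    proof -
      have "g (proj 1 1) = proj a d" using moeb_proj[OF det' nz11] gd b0 c0 by simp
      moreover have "(a, d) \<noteq> (0, 0)" using ad by simp
      ultimately show ?thesis using rm_proj[OF nd] by simp
    qed
    ultimately have "proj (a * Ph f 1 1) (d * Qh f 1 1) = proj (Ph f a d) (Qh f a d)" using comm by simp
    moreover have "(a * Ph f 1 1, d * Qh f 1 1) \<noteq> (0, 0)"
      using nd_nz[OF nd nz11] ad by auto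
    moreover have "(Ph f a d, Qh f a d) \<noteq> (0, 0)" using nd_nz[OF nd] ad by simp
    ultimately have e: "a * Ph f 1 1 * Qh f a d = d * Qh f 1 1 * Ph f a d"
      using proj_eq[of "a * Ph f 1 1" "d * Qh f 1 1" "Ph f a d" "Qh f a d"] by simp
    have "a * Ph f 1 1 * Qh f a d - d * Qh f 1 1 * Ph f a d = a * d * (d - a) * (p2 f * q0 f - p1 f * q1 f)"
      using p0 q2 by (simp add: Ph_def Qh_def algebra_simps power2_eq_square)
    hence "a * d * (d - a) * (p2 f * q0 f - p1 f * q1 f) = 0" using e by simp
    hence "d = a" using ad key2 by simp
    thus "g = id" using gd b0 c0 moeb_scalar_id ad by simp
  qed
  thus ?thesis using id_Aut by blast
qed

lemma aut_cross:
  assumes nd: "nd f" and det: "a * d - b * c \<noteq> 0" and g: "moebius a b c d \<in> Aut (rm f)"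
    and xy: "(x, y) \<noteq> (0, 0)"
  shows "(a * Ph f x y + b * Qh f x y) * Qh f (a * x + b * y) (c * x + d * y) =
         (c * Ph f x y + d * Qh f x y) * Ph f (a * x + b * y) (c * x + d * y)"
proof -
  let ?g = "moebius a b c d"
  have comm: "?g (rm f (proj x y)) = rm f (?g (proj x y))"
    using g Aut_iff by (metis comp_apply)
  have n1: "(Ph f x y, Qh f x y) \<noteq> (0, 0)" using nd_nz[OF nd xy] .
  have n2: "(a * x + b * y, c * x + d * y) \<noteq> (0, 0)" using lin_nz[OF det xy] .
  have l: "?g (rm f (proj x y)) = proj (a * Ph f x y + b * Qh f x y) (c * Ph f x y + d * Qh f x y)"
    using rm_proj[OF nd xy] moeb_proj[OF det n1] by simp
  have r: "rm f (?g (proj x y)) = proj (Ph f (a * x + b * y) (c * x + d * y)) (Qh f (a * x + b * y) (c * x + d * y))"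
    using moeb_proj[OF det xy] rm_proj[OF nd n2] by simp
  have n3: "(a * Ph f x y + b * Qh f x y, c * Ph f x y + d * Qh f x y) \<noteq> (0, 0)" using lin_nz[OF det n1] .
  have n4: "(Ph f (a * x + b * y) (c * x + d * y), Qh f (a * x + b * y) (c * x + d * y)) \<noteq> (0, 0)"
    using nd_nz[OF nd n2] .
  show ?thesis using comm l r proj_eq[OF n3 n4] by simp
qed

lemma quad_root:
  fixes A B C :: complex
  assumes "\<And>z. A * z^2 + B * z + C \<noteq> 0"
  shows "A = 0 \<and> B = 0"
proof (cases "A = 0")
  case True
  show ?thesis
  proof (rule ccontr)
    assume "\<not> (A = 0 \<and> B = 0)"
    hence B: "B \<noteq> 0" using True by simp
    have "A * (- C / B)^2 + B * (- C / B) + C = 0" using True B by (simp add: field_simps)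
    thus False using assms by blast
  qed
next
  case False
  define s where "s = csqrt (B^2 - 4 * A * C)"
  have s2: "s^2 = B^2 - 4 * A * C" unfolding s_def by simp
  define z where "z = (- B + s) / (2 * A)"
  have "A * z^2 + B * z + C = (s^2 - (B^2 - 4 * A * C)) / (4 * A)"
    using False unfolding z_def by (simp add: field_simps power2_eq_square)
  also have "\<dots> = 0" using s2 by simp
  finally show ?thesis using assms by blast
qed

lemma nf1:
  assumes nd: "nd f" and F: "fixpts (rm f) = {None}"
  shows "\<exists>g. g \<noteq> id \<and> g \<circ> g = id \<and> Aut (rm f) = {id, g}"
proof -
  have fi: "rm f None = None" using F by (auto simp: fixpts_def)
  have q2: "q2 f = 0" and p2: "p2 f \<noteq> 0" using multinf[OF nd fi] by auto
  have nofix: "Ph f z 1 \<noteq> Qh f z 1 * z" for z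
  proof
    assume "Ph f z 1 = Qh f z 1 * z"
    hence "Some z \<in> fixpts (rm f)" using fix_fin_iff[OF nd] by (simp add: fixpts_def)
    thus False using F by simp
  qed
  have "(p2 f - q1 f) * z^2 + (p1 f - q0 f) * z + p0 f \<noteq> 0" for z
  proof -
    have "Ph f z 1 - Qh f z 1 * z = (p2 f - q1 f) * z^2 + (p1 f - q0 f) * z + p0 f"
      using q2 by (simp add: Ph_def Qh_def algebra_simps power2_eq_square)
    thus ?thesis using nofix[of z] by auto
  qed
  from quad_root[OF this] have e1: "p2 f = q1 f" and e2: "p1 f = q0 f" by auto
  have P0: "p0 f \<noteq> 0" using nofix[of 0] by (simp add: Ph_def Qh_def)
  have Q1: "q1 f \<noteq> 0" using p2 e1 by simp
  define Q0 where "Q0 = q0 f"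
  define Q1' where "Q1' = q1 f"
  define P0' where "P0' = p0 f"
  have Phf: "Ph f x y = Q1' * x^2 + Q0 * x * y + P0' * y^2" for x y
    using e1 e2 by (simp add: Ph_def Q0_def Q1'_def P0'_def)
  have Qhf: "Qh f x y = Q1' * x * y + Q0 * y^2" for x y
    using q2 by (simp add: Qh_def Q0_def Q1'_def)
  have Q1n: "Q1' \<noteq> 0" using Q1 Q1'_def by simp
  have P0n: "P0' \<noteq> 0" using P0 P0'_def by simp
  define g0 where "g0 = moebius (- Q1') (- 2 * Q0) 0 Q1'"
  have det0: "(- Q1') * Q1' - (- 2 * Q0) * 0 \<noteq> 0" using Q1n by simp
  have g0g0: "g0 \<circ> g0 = id"
  proof -
    have "g0 \<circ> g0 = moebius (Q1' * Q1') 0 0 (Q1' * Q1')"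
      unfolding g0_def moeb_comp[OF det0 det0] by (simp add: algebra_simps)
    thus ?thesis using moeb_scalar_id Q1n by simp
  qed
  have g0n: "g0 \<noteq> id"
  proof
    assume h: "g0 = id"
    define z where "z = 1 - Q0 / Q1'"
    have "g0 (Some z) = Some ((- Q1' * z + - 2 * Q0) / Q1')"
      unfolding g0_def using Q1n by (simp add: moebius_def)
    hence "(- Q1' * z + - 2 * Q0) / Q1' = z" using h by simp
    hence "- Q1' * z + - 2 * Q0 = Q1' * z" using Q1n by (simp add: field_simps)
    hence "Q1' = 0" unfolding z_def using Q1n by (simp add: field_simps)
    thus False using Q1n by simp
  qed
  have g0M: "g0 \<in> Moeb" unfolding g0_def using moeb_Moeb[OF det0] .
  have g0A: "g0 \<in> Aut (rm f)"
  proof -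
    have "g0 \<circ> rm f = rm f \<circ> g0"
    proof (rule ext_proj)
      fix x y :: complex assume xy: "(x, y) \<noteq> (0, 0)"
      have n1: "(Ph f x y, Qh f x y) \<noteq> (0, 0)" using nd_nz[OF nd xy] .
      have n2: "(- Q1' * x + - 2 * Q0 * y, 0 * x + Q1' * y) \<noteq> (0, 0)" using lin_nz[OF det0 xy] .
      have "(g0 \<circ> rm f) (proj x y) = proj (- Q1' * Ph f x y + - 2 * Q0 * Qh f x y) (0 * Ph f x y + Q1' * Qh f x y)"
        unfolding g0_def using rm_proj[OF nd xy] moeb_proj[OF det0 n1] by simp
      moreover have "(rm f \<circ> g0) (proj x y) = proj (Ph f (- Q1' * x + - 2 * Q0 * y) (0 * x + Q1' * y))
           (Qh f (- Q1' * x + - 2 * Q0 * y) (0 * x + Q1' * y))"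
        unfolding g0_def using moeb_proj[OF det0 xy] rm_proj[OF nd n2] by simp
      moreover have "Ph f (- Q1' * x + - 2 * Q0 * y) (0 * x + Q1' * y) = (- Q1') * (- Q1' * Ph f x y + - 2 * Q0 * Qh f x y)"
        unfolding Phf Qhf by (simp add: algebra_simps power2_eq_square)
      moreover have "Qh f (- Q1' * x + - 2 * Q0 * y) (0 * x + Q1' * y) = (- Q1') * (0 * Ph f x y + Q1' * Qh f x y)"
        unfolding Phf Qhf by (simp add: algebra_simps power2_eq_square)
      ultimately show "(g0 \<circ> rm f) (proj x y) = (rm f \<circ> g0) (proj x y)"
        using proj_scale[of "- Q1'"] Q1n by simp
    qed
    thus ?thesis using g0M Aut_iff by blast
  qed
  have sub: "g = id \<or> g = g0" if g: "g \<in> Aut (rm f)" for g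
  proof -
    obtain a b c d where det: "a * d - b * c \<noteq> 0" and gd: "g = moebius a b c d"
      using g unfolding Aut_def by (auto elim: MoebE)
    have "g None \<in> fixpts (rm f)" using aut_maps[OF g] F by simp
    hence "g None = None" using F by simp
    hence c0: "c = 0" using gd moeb_None by simp
    have ad: "a \<noteq> 0" "d \<noteq> 0" using det c0 by auto
    have g': "moebius a b c d \<in> Aut (rm f)" using g gd by simp
    have key: "a * (Q1' * (a * x + b) + Q0 * d) = (Q1' * x + Q0) * d^2" for x
    proof -
      have "((x::complex), (1::complex)) \<noteq> (0, 0)" by simp
      from aut_cross[OF nd det g' this]
      have e: "(a * Ph f x 1 + b * Qh f x 1) * Qh f (a * x + b * 1) (c * x + d * 1) =
         (c * Ph f x 1 + d * Qh f x 1) * Ph f (a * x + b * 1) (c * x + d * 1)" .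
      have "(a * Ph f x 1 + b * Qh f x 1) * Qh f (a * x + b * 1) (c * x + d * 1) -
         (c * Ph f x 1 + d * Qh f x 1) * Ph f (a * x + b * 1) (c * x + d * 1) =
         d * P0' * (a * (Q1' * (a * x + b) + Q0 * d) - (Q1' * x + Q0) * d^2)"
        unfolding Phf Qhf c0 by (simp add: algebra_simps power2_eq_square)
      hence "d * P0' * (a * (Q1' * (a * x + b) + Q0 * d) - (Q1' * x + Q0) * d^2) = 0" using e by simp
      thus ?thesis using ad P0n by simp
    qed
    have k0: "a * (Q1' * b + Q0 * d) = Q0 * d^2" using key[of 0] by simp
    have k1: "a * (Q1' * (a + b) + Q0 * d) = (Q1' + Q0) * d^2" using key[of 1] by simp
    have "Q1' * (a * a - d * d) = (a * (Q1' * (a + b) + Q0 * d) - (Q1' + Q0) * d^2) - (a * (Q1' * b + Q0 * d) - Q0 * d^2)"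
      by (simp add: algebra_simps power2_eq_square)
    hence "Q1' * (a * a - d * d) = 0" using k0 k1 by simp
    hence "(a - d) * (a + d) = 0" using Q1n by (simp add: algebra_simps)
    hence "a = d \<or> a = - d" by (auto simp: add_eq_0_iff)
    thus ?thesis
    proof
      assume a: "a = d"
      hence "d * Q1' * b = 0" using k0 by (simp add: algebra_simps power2_eq_square)
      hence "b = 0" using ad Q1n by simp
      thus ?thesis using gd a c0 moeb_scalar_id ad by simp
    next
      assume a: "a = - d"
      hence "- d * (Q1' * b + Q0 * d) = Q0 * d^2" using k0 by simp
      hence "d * (Q1' * b + 2 * Q0 * d) = 0" by (simp add: algebra_simps power2_eq_square)
      hence "Q1' * b + 2 * Q0 * d = 0" using ad by simp
      hence "Q1' * b = - (2 * Q0 * d)" by (simp add: eq_neg_iff_add_eq_0)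
      hence b: "b = (d / Q1') * (- 2 * Q0)" using Q1n by (simp add: field_simps)
      have s0: "d / Q1' \<noteq> 0" using ad Q1n by simp
      have "g = moebius ((d / Q1') * (- Q1')) ((d / Q1') * (- 2 * Q0)) ((d / Q1') * 0) ((d / Q1') * Q1')"
        using gd a b c0 Q1n by simp
      also have "\<dots> = g0" unfolding g0_def by (rule moeb_scale[OF s0])
      finally show ?thesis by simp
    qed
  qed
  have "Aut (rm f) = {id, g0}" using sub id_Aut g0A by blast
  thus ?thesis using g0n g0g0 by blast
qed

definition mk3 :: "'a \<Rightarrow> 'a \<Rightarrow> 'a \<Rightarrow> 'a \<Rightarrow> 'a \<Rightarrow> 'a \<Rightarrow> ('a \<Rightarrow> 'a)" where
  "mk3 w1 w2 w3 u1 u2 u3 = restrict (\<lambda>x. if x = w1 then u1 else if x = w2 then u2 else u3) {w1, w2, w3}"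

context
  fixes w1 w2 w3 :: 'a
  assumes d: "w1 \<noteq> w2" "w1 \<noteq> w3" "w2 \<noteq> w3"
begin

lemma mk3_app: "mk3 w1 w2 w3 u1 u2 u3 w1 = u1" "mk3 w1 w2 w3 u1 u2 u3 w2 = u2"
  "mk3 w1 w2 w3 u1 u2 u3 w3 = u3"
  using d by (auto simp: mk3_def)

lemma mk3_eq: "mk3 w1 w2 w3 u1 u2 u3 = mk3 w1 w2 w3 v1 v2 v3 \<longleftrightarrow> u1 = v1 \<and> u2 = v2 \<and> u3 = v3"
proof
  assume "mk3 w1 w2 w3 u1 u2 u3 = mk3 w1 w2 w3 v1 v2 v3"
  thus "u1 = v1 \<and> u2 = v2 \<and> u3 = v3" using mk3_app by metis
qed simp

lemma mk3_ext: "mk3 w1 w2 w3 u1 u2 u3 \<in> extensional {w1, w2, w3}"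
  unfolding mk3_def by simp

lemma bij_mk3:
  assumes "{u1, u2, u3} = {w1, w2, w3}" "u1 \<noteq> u2" "u1 \<noteq> u3" "u2 \<noteq> u3"
  shows "bij_betw (mk3 w1 w2 w3 u1 u2 u3) {w1, w2, w3} {w1, w2, w3}"
proof -
  have im: "mk3 w1 w2 w3 u1 u2 u3 ` {w1, w2, w3} = {u1, u2, u3}" by (simp add: mk3_app)
  have "inj_on (mk3 w1 w2 w3 u1 u2 u3) {w1, w2, w3}"
    unfolding inj_on_def using assms(2-4) d by (auto simp: mk3_app)
  thus ?thesis using im assms(1) by (simp add: bij_betw_def)
qed

lemma bij_is_mk3:
  assumes "\<sigma> \<in> extensional {w1, w2, w3}" "bij_betw \<sigma> {w1, w2, w3} {w1, w2, w3}"
  shows "\<sigma> = mk3 w1 w2 w3 (\<sigma> w1) (\<sigma> w2) (\<sigma> w3)"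
  by (rule extensionalityI[OF assms(1) mk3_ext]) (auto simp: mk3_app)

lemma bij_vals:
  assumes "bij_betw \<sigma> {w1, w2, w3} {w1, w2, w3}"
  shows "\<sigma> w1 \<in> {w1, w2, w3}" "\<sigma> w2 \<in> {w1, w2, w3}" "\<sigma> w3 \<in> {w1, w2, w3}"
    "\<sigma> w1 \<noteq> \<sigma> w2" "\<sigma> w1 \<noteq> \<sigma> w3" "\<sigma> w2 \<noteq> \<sigma> w3"
  using assms d unfolding bij_betw_def inj_on_def by auto

lemma count3:
  fixes \<mu> :: "'a \<Rightarrow> 'b"
  defines "S \<equiv> {\<sigma>. \<sigma> \<in> extensional {w1, w2, w3} \<and> bij_betw \<sigma> {w1, w2, w3} {w1, w2, w3}
              \<and> (\<forall>z\<in>{w1, w2, w3}. \<mu> (\<sigma> z) = \<mu> z)}"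
  shows "(card (\<mu> ` {w1, w2, w3}) = 3 \<longrightarrow> card S = 1)
       \<and> (card (\<mu> ` {w1, w2, w3}) = 2 \<longrightarrow> card S = 2)
       \<and> (card (\<mu> ` {w1, w2, w3}) = 1 \<longrightarrow> card S = 6)"
proof -
  let ?m = "mk3 w1 w2 w3"
  define six where "six = {?m w1 w2 w3, ?m w2 w1 w3, ?m w3 w2 w1, ?m w1 w3 w2, ?m w2 w3 w1, ?m w3 w1 w2}"
  have B: "{\<sigma>. \<sigma> \<in> extensional {w1, w2, w3} \<and> bij_betw \<sigma> {w1, w2, w3} {w1, w2, w3}} = six"
  proof safe
    fix \<sigma> assume e: "\<sigma> \<in> extensional {w1, w2, w3}" and b: "bij_betw \<sigma> {w1, w2, w3} {w1, w2, w3}"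
    have s: "\<sigma> = ?m (\<sigma> w1) (\<sigma> w2) (\<sigma> w3)" using bij_is_mk3[OF e b] .
    note v = bij_vals[OF b]
    show "\<sigma> \<in> six"
      unfolding six_def using v by (subst s) (auto simp: mk3_eq)
  next
    fix \<sigma> assume "\<sigma> \<in> six" thus "\<sigma> \<in> extensional {w1, w2, w3}" unfolding six_def using mk3_ext by auto
  next
    fix \<sigma> assume "\<sigma> \<in> six" thus "bij_betw \<sigma> {w1, w2, w3} {w1, w2, w3}"
      unfolding six_def using d by (auto intro!: bij_mk3 simp: insert_commute)
  qed
  have S: "S = {\<sigma> \<in> six. \<forall>z\<in>{w1, w2, w3}. \<mu> (\<sigma> z) = \<mu> z}" unfolding S_def B[symmetric] by auto
  have dist: "?m u1 u2 u3 \<noteq> ?m v1 v2 v3" if "u1 \<noteq> v1 \<or> u2 \<noteq> v2 \<or> u3 \<noteq> v3" for u1 u2 u3 v1 v2 v3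
    using that mk3_eq by blast
  show ?thesis
  proof (intro conjI impI)
    assume "card (\<mu> ` {w1, w2, w3}) = 3"
    hence m: "\<mu> w1 \<noteq> \<mu> w2" "\<mu> w1 \<noteq> \<mu> w3" "\<mu> w2 \<noteq> \<mu> w3"
      by (auto simp: card_insert_if split: if_splits)
    have "S = {?m w1 w2 w3}" unfolding S six_def using m by (auto simp: mk3_app)
    thus "card S = 1" by simp
  next
    assume "card (\<mu> ` {w1, w2, w3}) = 1"
    hence m: "\<mu> w1 = \<mu> w2" "\<mu> w1 = \<mu> w3" "\<mu> w2 = \<mu> w3"
      by (auto simp: card_insert_if split: if_splits)
    have "S = six" unfolding S six_def using m by (auto simp: mk3_app)
    thus "card S = 6" unfolding six_def using d by (simp add: mk3_eq)
  next
    assume "card (\<mu> ` {w1, w2, w3}) = 2"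
    hence m: "(\<mu> w1 = \<mu> w2 \<and> \<mu> w1 \<noteq> \<mu> w3) \<or> (\<mu> w1 = \<mu> w3 \<and> \<mu> w1 \<noteq> \<mu> w2) \<or> (\<mu> w2 = \<mu> w3 \<and> \<mu> w1 \<noteq> \<mu> w2)"
      by (auto simp: card_insert_if split: if_splits)
    thus "card S = 2"
    proof (elim disjE conjE)
      assume "\<mu> w1 = \<mu> w2" "\<mu> w1 \<noteq> \<mu> w3"
      hence "S = {?m w1 w2 w3, ?m w2 w1 w3}" unfolding S six_def by (auto simp: mk3_app)
      thus "card S = 2" using d by (simp add: mk3_eq)
    next
      assume "\<mu> w1 = \<mu> w3" "\<mu> w1 \<noteq> \<mu> w2"
      hence "S = {?m w1 w2 w3, ?m w3 w2 w1}" unfolding S six_def by (auto simp: mk3_app)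
      thus "card S = 2" using d by (simp add: mk3_eq)
    next
      assume "\<mu> w2 = \<mu> w3" "\<mu> w1 \<noteq> \<mu> w2"
      hence "S = {?m w1 w2 w3, ?m w1 w3 w2}" unfolding S six_def by (auto simp: mk3_app)
      thus "card S = 2" using d by (simp add: mk3_eq)
    qed
  qed
qed

end

lemma conj_cancel:
  assumes "bij K"
  shows "inv K \<circ> (K \<circ> h \<circ> inv K) \<circ> K = h" "K \<circ> (inv K \<circ> h \<circ> K) \<circ> inv K = h"
proof -
  have i1: "inv K \<circ> K = id" using assms bij_is_inj inj_iff by blast
  have i2: "K \<circ> inv K = id" using assms bij_is_surj surj_iff by blast
  show "inv K \<circ> (K \<circ> h \<circ> inv K) \<circ> K = h"
    by (simp add: fun_eq_iff) (metis i1 comp_apply id_apply)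
  show "K \<circ> (inv K \<circ> h \<circ> K) \<circ> inv K = h"
    by (simp add: fun_eq_iff) (metis i2 comp_apply id_apply)
qed

lemma conj_rm':
  assumes det: "a * d - b * c \<noteq> 0" and nd: "nd f"
  shows "moebius a b c d \<circ> rm f \<circ> inv (moebius a b c d) = rm (conjc a b c d f)"
  using conj_rm(1)[OF det nd] moeb_inv[OF det] by simp

lemma case2:
  assumes nd: "nd c0" and F: "card (fixpts (rm c0)) = 2"
  shows "Aut (rm c0) = {id}"
proof -
  obtain u v where uv: "u \<noteq> v" "fixpts (rm c0) = {u, v}" using F card_2_iff by metis
  obtain a b c d where det: "a * d - b * c \<noteq> 0" and Ku: "moebius a b c d u = Some 0"
    and Kv: "moebius a b c d v = None" using mob2[OF uv(1)] by blast
  let ?K = "moebius a b c d"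
  have KM: "?K \<in> Moeb" using moeb_Moeb[OF det] .
  have bK: "bij ?K" using moeb_bij[OF det] .
  have nd1: "nd (conjc a b c d c0)" using conj_rm(2)[OF det nd] .
  have "fixpts (rm (conjc a b c d c0)) = ?K ` fixpts (rm c0)"
    using fixpts_conj[OF bK, of "rm c0"] conj_rm'[OF det nd] by simp
  hence F1: "fixpts (rm (conjc a b c d c0)) = {Some 0, None}" using uv Ku Kv by simp
  have A1: "Aut (rm (conjc a b c d c0)) = {id}" using nf2[OF nd1 F1] .
  have "g = id" if g: "g \<in> Aut (rm c0)" for g
  proof -
    have "?K \<circ> g \<circ> inv ?K \<in> Aut (?K \<circ> rm c0 \<circ> inv ?K)" using aut_transport[OF KM g] .
    hence "?K \<circ> g \<circ> inv ?K = id" using A1 conj_rm'[OF det nd] by simp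
    hence "inv ?K \<circ> (?K \<circ> g \<circ> inv ?K) \<circ> ?K = inv ?K \<circ> id \<circ> ?K" by simp
    thus "g = id" using conj_cancel(1)[OF bK] bK bij_is_inj inj_iff by (metis comp_id)
  qed
  thus ?thesis using id_Aut by blast
qed

lemma case1:
  assumes nd: "nd c0" and F: "card (fixpts (rm c0)) = 1"
  shows "\<exists>g. g \<noteq> id \<and> g \<circ> g = id \<and> Aut (rm c0) = {id, g}"
proof -
  obtain u where u: "fixpts (rm c0) = {u}" using F card_1_singletonE by blast
  define v :: sphere where "v = (if u = None then Some 0 else None)"
  have uv: "v \<noteq> u" by (cases u) (auto simp: v_def)
  obtain a b c d where det: "a * d - b * c \<noteq> 0"
    and Ku: "moebius a b c d u = None" using mob2[OF uv] by blast
  let ?K = "moebius a b c d"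
  have KM: "?K \<in> Moeb" using moeb_Moeb[OF det] .
  have bK: "bij ?K" using moeb_bij[OF det] .
  have nd1: "nd (conjc a b c d c0)" using conj_rm(2)[OF det nd] .
  have "fixpts (rm (conjc a b c d c0)) = ?K ` fixpts (rm c0)"
    using fixpts_conj[OF bK, of "rm c0"] conj_rm'[OF det nd] by simp
  hence F1: "fixpts (rm (conjc a b c d c0)) = {None}" using u Ku by simp
  obtain g0 where g0: "g0 \<noteq> id" "g0 \<circ> g0 = id" "Aut (rm (conjc a b c d c0)) = {id, g0}"
    using nf1[OF nd1 F1] by blast
  define g where "g = inv ?K \<circ> g0 \<circ> ?K"
  have Kg: "?K \<circ> g \<circ> inv ?K = g0" unfolding g_def using conj_cancel(2)[OF bK] .
  have iff: "h \<in> Aut (rm c0) \<longleftrightarrow> ?K \<circ> h \<circ> inv ?K \<in> {id, g0}" for h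
    using aut_transport_iff[OF KM, of h "rm c0"] conj_rm'[OF det nd] g0(3) by simp
  have i1: "inv ?K \<circ> ?K = id" using bK bij_is_inj inj_iff by blast
  have bk: "h = inv ?K \<circ> (?K \<circ> h \<circ> inv ?K) \<circ> ?K" for h using conj_cancel(1)[OF bK] by simp
  have "Aut (rm c0) = {id, g}"
  proof (intro equalityI subsetI)
    fix h assume "h \<in> Aut (rm c0)"
    hence "?K \<circ> h \<circ> inv ?K = id \<or> ?K \<circ> h \<circ> inv ?K = g0" using iff by blast
    moreover have "inv ?K \<circ> id \<circ> ?K = id" using i1 by simp
    ultimately have "h = id \<or> h = g" using bk[of h] unfolding g_def by metis
    thus "h \<in> {id, g}" by blast
  next
    fix h assume "h \<in> {id, g}"
    thus "h \<in> Aut (rm c0)" using id_Aut iff Kg by auto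
  qed
  moreover have "g \<noteq> id"
  proof
    assume "g = id"
    hence "g0 = ?K \<circ> inv ?K" using Kg by simp
    thus False using g0(1) bK bij_is_surj surj_iff by metis
  qed
  moreover have "g \<circ> g = id"
  proof -
    have "g \<circ> g = inv ?K \<circ> (g0 \<circ> (?K \<circ> inv ?K) \<circ> g0) \<circ> ?K" unfolding g_def by (simp add: o_assoc)
    also have "\<dots> = inv ?K \<circ> ?K" using bK bij_is_surj surj_iff g0(2) by (metis comp_id)
    also have "\<dots> = id" using i1 .
    finally show ?thesis .
  qed
  ultimately show ?thesis by blast
qed

lemma inv_comp_val: "inj k \<Longrightarrow> h w = k u \<Longrightarrow> (inv k \<circ> h) w = u"
  by simp

lemma case3:
  assumes nd: "nd c0" and F3: "card (fixpts (rm c0)) = 3"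
  shows "(\<forall>g\<in>Aut (rm c0). g ` fixpts (rm c0) = fixpts (rm c0))
      \<and> inj_on (\<lambda>g. restrict g (fixpts (rm c0))) (Aut (rm c0))
      \<and> (\<lambda>g. restrict g (fixpts (rm c0))) ` Aut (rm c0) =
          {\<sigma>. \<sigma> \<in> extensional (fixpts (rm c0)) \<and> bij_betw \<sigma> (fixpts (rm c0)) (fixpts (rm c0))
              \<and> (\<forall>z\<in>fixpts (rm c0). multiplier (rm c0) (\<sigma> z) = multiplier (rm c0) z)}
      \<and> (card (multiplier (rm c0) ` fixpts (rm c0)) = 3 \<longrightarrow> card (Aut (rm c0)) = 1)
      \<and> (card (multiplier (rm c0) ` fixpts (rm c0)) = 2 \<longrightarrow> card (Aut (rm c0)) = 2)
      \<and> (card (multiplier (rm c0) ` fixpts (rm c0)) = 1 \<longrightarrow> card (Aut (rm c0)) = 6)"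
proof -
  let ?f = "rm c0"
  let ?F = "fixpts (rm c0)"
  let ?\<mu> = "multiplier (rm c0)"
  obtain w1 w2 w3 where F: "?F = {w1, w2, w3}" and d: "w1 \<noteq> w2" "w2 \<noteq> w3" "w1 \<noteq> w3"
    using F3 card_3_iff by metis
  have d': "w1 \<noteq> w2" "w1 \<noteq> w3" "w2 \<noteq> w3" using d by auto
  have fin: "finite ?F" using F by simp
  have A: "\<forall>g\<in>Aut ?f. g ` ?F = ?F" using aut_fix fin by blast
  have B: "inj_on (\<lambda>g. restrict g ?F) (Aut ?f)"
  proof (rule inj_onI)
    fix g1 g2 assume g1: "g1 \<in> Aut ?f" and g2: "g2 \<in> Aut ?f"
      and e: "restrict g1 ?F = restrict g2 ?F"
    have "g1 w = g2 w" if "w \<in> ?F" for w using fun_cong[OF e, of w] that by simp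
    hence "g1 w1 = g2 w1" "g1 w2 = g2 w2" "g1 w3 = g2 w3" using F by auto
    moreover have "g1 \<in> Moeb" "g2 \<in> Moeb" using g1 g2 Aut_iff by auto
    ultimately show "g1 = g2" using Moeb_agree3 d' by blast
  qed
  define S where "S = {\<sigma>. \<sigma> \<in> extensional ?F \<and> bij_betw \<sigma> ?F ?F \<and> (\<forall>z\<in>?F. ?\<mu> (\<sigma> z) = ?\<mu> z)}"
  have C: "(\<lambda>g. restrict g ?F) ` Aut ?f = S"
  proof (intro equalityI subsetI)
    fix \<tau> assume "\<tau> \<in> (\<lambda>g. restrict g ?F) ` Aut ?f"
    then obtain g where g: "g \<in> Aut ?f" and t: "\<tau> = restrict g ?F" by blast
    have "inj_on g ?F" using g Aut_iff Moeb_bij bij_is_inj inj_on_subset by blast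
    hence bg: "bij_betw g ?F ?F" using A g by (simp add: bij_betw_def)
    have "\<forall>z\<in>?F. ?\<mu> (\<tau> z) = ?\<mu> z" using aut_mult[OF nd g] t by simp
    thus "\<tau> \<in> S" unfolding S_def using t bg by simp
  next
    fix \<sigma> assume "\<sigma> \<in> S"
    hence se: "\<sigma> \<in> extensional ?F" and sb: "bij_betw \<sigma> ?F ?F" and sm: "\<forall>z\<in>?F. ?\<mu> (\<sigma> z) = ?\<mu> z"
      unfolding S_def by auto
    have sb': "bij_betw \<sigma> {w1, w2, w3} {w1, w2, w3}" using sb F by simp
    note v = bij_vals[OF d' sb']
    obtain a b c d where det: "a * d - b * c \<noteq> 0" and K1: "moebius a b c d w1 = Some 0"
      "moebius a b c d w2 = Some 1" "moebius a b c d w3 = None" using mob3[OF d'] by blast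
    obtain a' b' c' d' where det': "a' * d' - b' * c' \<noteq> 0" and K2: "moebius a' b' c' d' (\<sigma> w1) = Some 0"
      "moebius a' b' c' d' (\<sigma> w2) = Some 1" "moebius a' b' c' d' (\<sigma> w3) = None"
      using mob3[OF v(4-6)] by blast
    let ?K1 = "moebius a b c d" and ?K2 = "moebius a' b' c' d'"
    define g where "g = inv ?K2 \<circ> ?K1"
    have gM: "g \<in> Moeb" unfolding g_def using Moeb_comp[OF Moeb_inv[OF moeb_Moeb[OF det']] moeb_Moeb[OF det]] .
    have inj2: "inj ?K2" using moeb_bij[OF det'] bij_is_inj by blast
    have gw: "g w1 = \<sigma> w1" "g w2 = \<sigma> w2" "g w3 = \<sigma> w3"
      unfolding g_def by (rule inv_comp_val[OF inj2], simp add: K1 K2)+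
    have gs: "g w = \<sigma> w" if "w \<in> ?F" for w
    proof -
      have "w = w1 \<or> w = w2 \<or> w = w3" using that unfolding F by blast
      thus ?thesis using gw by (elim disjE) simp_all
    qed
    have gF: "g ` ?F = ?F"
    proof -
      have "g ` ?F = \<sigma> ` ?F" by (rule image_cong[OF refl gs])
      also have "\<dots> = ?F" using sb bij_betw_imp_surj_on by blast
      finally show ?thesis .
    qed
    obtain A B C D where detg: "A * D - B * C \<noteq> 0" and gd: "g = moebius A B C D"
      using gM by (rule MoebE)
    let ?f' = "conjc A B C D c0"
    have nd': "nd ?f'" using conj_rm(2)[OF detg nd] .
    have f'e: "rm ?f' = g \<circ> ?f \<circ> inv g" using conj_rm'[OF detg nd] gd by simp
    have bg: "bij g" using gM Moeb_bij by blast
    have "fixpts (rm ?f') = fixpts (g \<circ> ?f \<circ> inv g)" by (simp only: f'e)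
    also have "\<dots> = g ` ?F" by (rule fixpts_conj[OF bg])
    also have "\<dots> = ?F" by (rule gF)
    finally have F': "fixpts (rm ?f') = {w1, w2, w3}" unfolding F .
    have m: "multiplier (rm ?f') p = multiplier ?f p" if p: "p \<in> {w1, w2, w3}" for p
    proof -
      obtain q where q: "q \<in> ?F" "p = g q" using p gF F by (metis imageE)
      have fq: "rm c0 q = q" using q(1) by (simp add: fixpts_def)
      have "multiplier (rm ?f') p = ?\<mu> q" using mult_conj[OF detg nd fq] q(2) gd by simp
      also have "\<dots> = ?\<mu> (\<sigma> q)" using sm q(1) by simp
      also have "\<dots> = ?\<mu> p" using gs[OF q(1)] q(2) by simp
      finally show ?thesis .
    qed
    have "rm ?f' = ?f" using uniq3[OF nd' nd d' F' F m] by simp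
    hence "g \<circ> ?f \<circ> inv g = ?f" using f'e by simp
    hence gA: "g \<in> Aut ?f" using gM unfolding Aut_def by simp
    have "restrict g ?F = \<sigma>" by (rule extensionalityI[OF restrict_extensional se]) (simp add: gs)
    thus "\<sigma> \<in> (\<lambda>g. restrict g ?F) ` Aut ?f" using gA by blast
  qed
  have cardA: "card (Aut ?f) = card S" using card_image[OF B] C by simp
  have D: "(card (?\<mu> ` {w1, w2, w3}) = 3 \<longrightarrow> card S = 1)
       \<and> (card (?\<mu> ` {w1, w2, w3}) = 2 \<longrightarrow> card S = 2)
       \<and> (card (?\<mu> ` {w1, w2, w3}) = 1 \<longrightarrow> card S = 6)"
    using count3[OF d', of ?\<mu>] unfolding S_def F .
  show ?thesis using A B C D cardA F unfolding S_def by simp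
qed

theorem mainTheorem8:
  assumes "f \<in> Rat2"
  shows
    "(card (fixpts f) = 3 \<longrightarrow>
        (\<forall>g\<in>Aut f. g ` fixpts f = fixpts f)
      \<and> inj_on (\<lambda>g. restrict g (fixpts f)) (Aut f)
      \<and> (\<lambda>g. restrict g (fixpts f)) ` Aut f =
          {\<sigma>. \<sigma> \<in> extensional (fixpts f) \<and> bij_betw \<sigma> (fixpts f) (fixpts f)
              \<and> (\<forall>z\<in>fixpts f. multiplier f (\<sigma> z) = multiplier f z)}
      \<and> (card (multiplier f ` fixpts f) = 3 \<longrightarrow> card (Aut f) = 1)
      \<and> (card (multiplier f ` fixpts f) = 2 \<longrightarrow> card (Aut f) = 2)
      \<and> (card (multiplier f ` fixpts f) = 1 \<longrightarrow> card (Aut f) = 6))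
   \<and> (card (fixpts f) = 2 \<longrightarrow> Aut f = {id})
   \<and> (card (fixpts f) = 1 \<longrightarrow> (\<exists>g. g \<noteq> id \<and> g \<circ> g = id \<and> Aut f = {id, g}))"
proof -
  obtain c0 where nd: "nd c0" and fc: "f = rm c0" using Rat2_rm[OF assms] by blast
  show ?thesis unfolding fc using case3[OF nd] case2[OF nd] case1[OF nd] by blast
qed

end
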